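(* Let $\mathcal{A}$ be a complex Banach algebra with unity and $a,b\in\mathcal{A}$ with $ab=0$. Then $a$ and $b$ are both g$\pi$-Hirano invertible if and only if $a+b$ is g$\pi$-Hirano invertible.
   Context: $\mathcal{A}^{qnil}$ denotes the set of quasinilpotent elements of $\mathcal{A}$ (spectrum equal to $\{0\}$). An element $a\in\mathcal{A}$ is g$\pi$-Hirano invertible if there exists $x\in\mathcal{A}$ with $xax=x$, $ax=xa$ and $a-a^{n+2}x\in\mathcal{A}^{qnil}$ for some positive integer $n$. *)

theory Defs
  imports "HOL-Analysis.Analysis"
begin

class complex_banach_algebra_1 = real_normed_algebra_1 + banach +
  fixes scaleC :: "complex \<Rightarrow> 'a \<Rightarrow> 'a"
  assumes scaleC_add_right: "scaleC c (x + y) = scaleC c x + scaleC c y"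
    and scaleC_add_left: "scaleC (c + d) x = scaleC c x + scaleC d x"
    and scaleC_scaleC: "scaleC c (scaleC d x) = scaleC (c * d) x"
    and scaleC_one: "scaleC 1 x = x"
    and scaleC_of_real: "scaleC (complex_of_real r) x = scaleR r x"
    and mult_scaleC_left: "scaleC c x * y = scaleC c (x * y)"
    and mult_scaleC_right: "x * scaleC c y = scaleC c (x * y)"
    and norm_scaleC: "norm (scaleC c x) = cmod c * norm x"

definition invertible_el :: "'a::ring_1 \<Rightarrow> bool" where
  "invertible_el x \<longleftrightarrow> (\<exists>y. x * y = 1 \<and> y * x = 1)"

definition spectrum :: "'a::complex_banach_algebra_1 \<Rightarrow> complex set" where
  "spectrum a = {z. \<not> invertible_el (scaleC z 1 - a)}"

definition quasinilpotent :: "'a::complex_banach_algebra_1 \<Rightarrow> bool" where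
  "quasinilpotent a \<longleftrightarrow> spectrum a = {0}"

definition gpi_Hirano_invertible :: "'a::complex_banach_algebra_1 \<Rightarrow> bool" where
  "gpi_Hirano_invertible a \<longleftrightarrow>
     (\<exists>x. x * a * x = x \<and> a * x = x * a \<and>
          (\<exists>n::nat. n > 0 \<and> quasinilpotent (a - a ^ (n + 2) * x)))"

end

theory Submission
  imports Defs "HOL-Computational_Algebra.Formal_Power_Series"
begin

context complex_banach_algebra_1 begin

lemma sC_zero_left[simp]: "scaleC 0 x = 0"
proof -
  have "scaleC (0+0) x = scaleC 0 x + scaleC 0 x" by (rule scaleC_add_left)
  then show ?thesis by simp
qed

lemma sC_zero_right[simp]: "scaleC c 0 = 0"
proof -
  have "scaleC c (0+0) = scaleC c 0 + scaleC c 0" by (rule scaleC_add_right)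
  then show ?thesis by simp
qed

lemma sC_minus_left: "scaleC (- c) x = - scaleC c x"
proof -
  have "scaleC (-c + c) x = scaleC (-c) x + scaleC c x" by (rule scaleC_add_left)
  then show ?thesis by (simp add: eq_neg_iff_add_eq_0)
qed

lemma sC_minus_right: "scaleC c (- x) = - scaleC c x"
proof -
  have "scaleC c (-x + x) = scaleC c (-x) + scaleC c x" by (rule scaleC_add_right)
  then show ?thesis by (simp add: eq_neg_iff_add_eq_0)
qed

lemma sC_diff_left: "scaleC (c - d) x = scaleC c x - scaleC d x"
  using scaleC_add_left[of c "-d" x] by (simp add: sC_minus_left)

lemma sC_diff_right: "scaleC c (x - y) = scaleC c x - scaleC c y"
  using scaleC_add_right[of c x "-y"] by (simp add: sC_minus_right)

lemma sC_sum_left: "scaleC (sum f S) x = sum (\<lambda>i. scaleC (f i) x) S"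
  by (induction S rule: infinite_finite_induct) (auto simp: scaleC_add_left)

lemma sC_sum_right: "scaleC c (sum f S) = sum (\<lambda>i. scaleC c (f i)) S"
  by (induction S rule: infinite_finite_induct) (auto simp: scaleC_add_right)

lemma sC_power: "(scaleC c x) ^ n = scaleC (c ^ n) (x ^ n)"
  by (induction n) (auto simp: scaleC_one mult_scaleC_left mult_scaleC_right scaleC_scaleC mult.commute)

lemma sC_1_mult[simp]: "scaleC c 1 * x = scaleC c x" "x * scaleC c 1 = scaleC c x"
  by (simp_all add: mult_scaleC_left mult_scaleC_right)


lemma sC_one_1: "scaleC 1 1 = 1" by (simp add: scaleC_one)

lemma sC_comm: "scaleC c x * y = y * scaleC c x \<longleftrightarrow> x * y = y * x \<or> c = 0"
proof
  assume h: "scaleC c x * y = y * scaleC c x"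
  show "x * y = y * x \<or> c = 0"
  proof (cases "c = 0")
    case False
    from h have "scaleC (1/c) (scaleC c (x*y)) = scaleC (1/c) (scaleC c (y*x))"
      by (simp add: mult_scaleC_left mult_scaleC_right)
    then show ?thesis using False by (simp add: scaleC_scaleC scaleC_one)
  qed simp
next
  assume "x * y = y * x \<or> c = 0"
  then show "scaleC c x * y = y * scaleC c x"
    by (auto simp: mult_scaleC_left mult_scaleC_right)
qed

lemma norm_sC1: "norm (scaleC c (1::'a)) = cmod c"
  by (simp add: norm_scaleC)

end

definition binv :: "'a::ring_1 \<Rightarrow> 'a" where
  "binv x = (SOME y. x * y = 1 \<and> y * x = 1)"

lemma binv: "invertible_el x \<Longrightarrow> x * binv x = 1 \<and> binv x * x = 1"
  unfolding invertible_el_def binv_def by (rule someI_ex)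

lemma binv_unique: "x * y = 1 \<Longrightarrow> y * x = 1 \<Longrightarrow> binv x = y"
proof -
  assume h: "x * y = 1" "y * x = 1"
  then have i: "invertible_el x" unfolding invertible_el_def by blast
  have "binv x = binv x * (x * y)" using h by simp
  also have "\<dots> = y" using binv[OF i] by (simp add: mult.assoc[symmetric])
  finally show ?thesis .
qed

lemma invertible_I: "x * y = 1 \<Longrightarrow> y * x = 1 \<Longrightarrow> invertible_el x"
  unfolding invertible_el_def by blast

lemma inv_mult: "invertible_el (x::'a::ring_1) \<Longrightarrow> invertible_el y \<Longrightarrow> invertible_el (x * y)"
proof -
  assume "invertible_el x" "invertible_el y"
  then obtain x' y' where "x*x' = 1" "x'*x = 1" "y*y'=1" "y'*y=1" unfolding invertible_el_def by blast
  then have "(x*y)*(y'*x') = 1" "(y'*x')*(x*y) = 1"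
    by (simp_all add: mult.assoc) (metis mult.assoc mult_1_left)+
  then show ?thesis by (rule invertible_I)
qed

lemma inv_one[simp]: "invertible_el (1::'a::ring_1)"
  by (rule invertible_I[of 1 1]) simp_all

lemma inv_minus: "invertible_el (x::'a::ring_1) \<Longrightarrow> invertible_el (- x)"
  unfolding invertible_el_def by (metis minus_mult_minus)

lemma comm_inv: "(x::'a::ring_1) * w = w * x \<Longrightarrow> w * v = 1 \<Longrightarrow> v * w = 1 \<Longrightarrow> x * v = v * x"
proof -
  assume h: "x * w = w * x" "w * v = 1" "v * w = 1"
  have "x * v = (v * w) * x * v" using h by simp
  also have "\<dots> = v * (x * w) * v" using h by (metis mult.assoc)
  also have "\<dots> = v * x" using h by (metis mult.assoc mult_1_right)
  finally show ?thesis .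
qed

lemma comm_binv: "invertible_el w \<Longrightarrow> (x::'a::ring_1) * w = w * x \<Longrightarrow> x * binv w = binv w * x"
  using binv comm_inv by blast

lemma inv_comm_factor:
  assumes c: "(x::'a::ring_1) * y = y * x" and i: "invertible_el (x * y)"
  shows "invertible_el x"
proof -
  let ?v = "binv (x*y)"
  have v: "x*y*?v = 1" "?v*(x*y) = 1" using binv[OF i] by auto
  have xc: "x * (x*y) = (x*y) * x" using c by (metis mult.assoc)
  have xv: "x * ?v = ?v * x" by (rule comm_binv[OF i xc])
  have "x * (y * ?v) = 1" using v by (simp add: mult.assoc)
  moreover have "(y * ?v) * x = 1" using v xv c by (metis mult.assoc)
  ultimately show ?thesis by (rule invertible_I)
qed

lemma inv_comm_factor2:
  assumes c: "(x::'a::ring_1) * y = y * x" and i: "invertible_el (x * y)"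
  shows "invertible_el y"
  using inv_comm_factor[of y x] c i by simp

lemma geom_factor:
  fixes z :: "'a::ring_1"
  shows "(1 - z) * (\<Sum>l<n. z^l) = 1 - z^n" "(\<Sum>l<n. z^l) * (1 - z) = 1 - z^n"
proof -
  show g1: "(1 - z) * (\<Sum>l<n. z^l) = 1 - z^n"
  proof (induction n)
    case (Suc n)
    have "(1 - z) * (\<Sum>l<Suc n. z^l) = (1 - z) * (\<Sum>l<n. z^l) + (1 - z) * z^n"
      by (simp add: distrib_left)
    also have "\<dots> = 1 - z^Suc n" using Suc by (simp add: algebra_simps)
    finally show ?case .
  qed simp
  have "z * (\<Sum>l<n. z^l) = (\<Sum>l<n. z^l) * z"
    by (simp add: sum_distrib_left sum_distrib_right power_commutes)
  then have "(\<Sum>l<n. z^l) * (1 - z) = (1 - z) * (\<Sum>l<n. z^l)" by (simp add: algebra_simps)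
  also have "\<dots> = 1 - z^n" by (rule g1)
  finally show "(\<Sum>l<n. z^l) * (1 - z) = 1 - z^n" .
qed

lemma inv_pow_factor:
  fixes z :: "'a::ring_1"
  assumes "invertible_el (1 - z^n)"
  shows "invertible_el (1 - z)"
proof -
  have c: "(1 - z) * (\<Sum>l<n. z^l) = (\<Sum>l<n. z^l) * (1 - z)" using geom_factor by metis
  show ?thesis using inv_comm_factor[OF c] geom_factor(1)[of z n] assms by simp
qed

lemma inv_power: "invertible_el (x::'a::ring_1) \<Longrightarrow> invertible_el (x^n)"
  by (induction n) (simp_all add: inv_mult)

lemma inv_sC: "c \<noteq> 0 \<Longrightarrow> invertible_el (x::'a::complex_banach_algebra_1) \<Longrightarrow> invertible_el (scaleC c x)"
proof -
  assume c: "c \<noteq> 0" and "invertible_el x"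
  then obtain y where y: "x*y = 1" "y*x = 1" unfolding invertible_el_def by blast
  have "scaleC c x * scaleC (1/c) y = 1" "scaleC (1/c) y * scaleC c x = 1"
    using c y by (simp_all add: mult_scaleC_left mult_scaleC_right scaleC_scaleC scaleC_one)
  then show ?thesis by (rule invertible_I)
qed

lemma inv_sC_iff: "c \<noteq> 0 \<Longrightarrow> invertible_el (scaleC c (x::'a::complex_banach_algebra_1)) \<longleftrightarrow> invertible_el x"
  using inv_sC[of c x] inv_sC[of "1/c" "scaleC c x"] by (auto simp: scaleC_scaleC scaleC_one)

lemma not_inv_zero: "\<not> invertible_el (0::'a::real_normed_algebra_1)"
  unfolding invertible_el_def by simp


lemma neumann:
  fixes u :: "'a::{real_normed_algebra_1,banach}"
  assumes u: "norm u < 1"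
  shows "invertible_el (1 - u) \<and> norm (binv (1 - u) - 1) \<le> norm u / (1 - norm u)"
proof -
  have gs: "summable (\<lambda>n. norm u ^ n)" using u by (simp add: summable_geometric)
  have ns: "summable (\<lambda>n. norm (u ^ n))"
    by (rule summable_comparison_test[OF _ gs]) (auto intro!: exI[of _ 0] norm_power_ineq)
  then have s: "summable (\<lambda>n. u ^ n)" by (rule summable_norm_cancel)
  define S where "S = (\<Sum>n. u ^ n)"
  have s1: "(\<Sum>n. u ^ Suc n) = S - 1" unfolding S_def using suminf_split_head[OF s] by simp
  have "u * S = (\<Sum>n. u * u ^ n)" unfolding S_def using suminf_mult[OF s, of u] by simp
  then have uS: "u * S = S - 1" using s1 by simp
  have "S * u = (\<Sum>n. u ^ n * u)" unfolding S_def using suminf_mult2[OF s, of u] by simp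
  then have Su: "S * u = S - 1" using s1 by (simp add: power_commutes)
  have l: "(1 - u) * S = 1" using uS by (simp add: algebra_simps)
  have r: "S * (1 - u) = 1" using Su by (simp add: algebra_simps)
  have inv: "invertible_el (1 - u)" by (rule invertible_I[OF l r])
  have b: "binv (1 - u) = S" by (rule binv_unique[OF l r])
  have ns1: "summable (\<lambda>n. norm (u ^ Suc n))" using ns by (rule summable_ignore_initial_segment[of _ 1, simplified])
  have gs1: "summable (\<lambda>n. norm u ^ Suc n)" using gs by (rule summable_ignore_initial_segment[of _ 1, simplified])
  have "norm (S - 1) = norm (\<Sum>n. u ^ Suc n)" using s1 by simp
  also have "\<dots> \<le> (\<Sum>n. norm (u ^ Suc n))" by (rule summable_norm[OF ns1])
  also have "\<dots> \<le> (\<Sum>n. norm u ^ Suc n)"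
    by (rule suminf_le[OF _ ns1 gs1]) (rule norm_power_ineq)
  also have "(\<Sum>n. norm u ^ Suc n) = norm u / (1 - norm u)"
  proof -
    have "(\<lambda>n. norm u * norm u ^ n) sums (norm u * (1 / (1 - norm u)))"
      by (rule sums_mult[OF geometric_sums]) (use u in simp)
    then show ?thesis by (simp add: sums_iff)
  qed
  finally show ?thesis using inv b by simp
qed

lemma inv_perturb:
  fixes x h :: "'a::{real_normed_algebra_1,banach}"
  assumes ix: "invertible_el x" and small: "norm (binv x) * norm h < 1"
  shows "invertible_el (x + h) \<and>
         norm (binv (x + h) - binv x) \<le> norm (binv x) * ((norm (binv x) * norm h) / (1 - norm (binv x) * norm h))"
proof -
  let ?y = "binv x"
  have y: "x * ?y = 1" "?y * x = 1" using binv[OF ix] by auto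
  let ?u = "- (?y * h)"
  have nu: "norm ?u \<le> norm ?y * norm h" by (simp add: norm_mult_ineq)
  then have nu1: "norm ?u < 1" using small by simp
  obtain iu bu where iu: "invertible_el (1 - ?u)" and bu: "norm (binv (1 - ?u) - 1) \<le> norm ?u / (1 - norm ?u)"
    using neumann[OF nu1] by blast
  let ?B = "binv (1 - ?u)"
  have B: "(1 - ?u) * ?B = 1" "?B * (1 - ?u) = 1" using binv[OF iu] by auto
  have xh: "x + h = x * (1 - ?u)" using y by (simp add: algebra_simps mult.assoc[symmetric])
  have l: "(x + h) * (?B * ?y) = 1"
    unfolding xh by (metis B(1) mult.assoc mult_1_left y(1))
  have r: "(?B * ?y) * (x + h) = 1"
    unfolding xh by (metis B(2) mult.assoc mult_1_left y(2))
  have inv: "invertible_el (x + h)" by (rule invertible_I[OF l r])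
  have b: "binv (x + h) = ?B * ?y" by (rule binv_unique[OF l r])
  have "norm (binv (x + h) - ?y) = norm ((?B - 1) * ?y)" unfolding b by (simp add: algebra_simps)
  also have "\<dots> \<le> norm (?B - 1) * norm ?y" by (rule norm_mult_ineq)
  also have "\<dots> \<le> (norm ?u / (1 - norm ?u)) * norm ?y"
    by (rule mult_right_mono[OF bu norm_ge_zero])
  also have "norm ?u / (1 - norm ?u) \<le> (norm ?y * norm h) / (1 - norm ?y * norm h)"
    using nu nu1 small by (intro frac_le) (auto intro: mult_nonneg_nonneg)
  finally show ?thesis using inv by (simp add: mult_right_mono mult.commute mult_left_mono)
qed

lemma inv_open:
  fixes x :: "'a::{real_normed_algebra_1,banach}"
  assumes "invertible_el x"
  shows "\<exists>d>0. \<forall>x'. dist x' x < d \<longrightarrow> invertible_el x'"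
proof -
  define d where "d = 1 / (norm (binv x) + 1)"
  have np: "0 < norm (binv x) + 1" using norm_ge_zero[of "binv x"] by linarith
  have d: "d > 0" unfolding d_def using np by simp
  { fix x' assume "dist x' x < d"
    then have h: "norm (x' - x) < d" by (simp add: dist_norm)
    have "norm (binv x) * norm (x' - x) \<le> norm (binv x) * d" using h by (simp add: mult_left_mono)
    also have "\<dots> < 1" unfolding d_def using np by (simp add: field_simps)
    finally have "invertible_el (x + (x' - x))" using inv_perturb[OF assms] by blast
    then have "invertible_el x'" by simp }
  then show ?thesis using d by blast
qed

lemma isCont_binv:
  fixes x :: "'a::{real_normed_algebra_1,banach}"
  assumes ix: "invertible_el x"
  shows "isCont binv x"
  unfolding continuous_at_eps_delta
proof (intro allI impI)
  fix e :: real assume e: "e > 0"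
  let ?n = "norm (binv x)"
  define d where "d = min (1 / (2 * (?n + 1))) (e / (2 * (?n + 1)^2))"
  have np: "0 < ?n + 1" using norm_ge_zero[of "binv x"] by linarith
  have d: "d > 0" unfolding d_def using e np by simp
  { fix x' assume "dist x' x < d"
    then have h: "norm (x' - x) < d" by (simp add: dist_norm)
    let ?h = "x' - x"
    have t1: "?n * norm ?h \<le> 1/2"
    proof -
      have "?n * norm ?h \<le> (?n + 1) * (1 / (2 * (?n + 1)))"
        using h d_def by (intro mult_mono) auto
      also have "\<dots> = 1/2" using np by (simp add: field_simps)
      finally show ?thesis .
    qed
    then have sm: "?n * norm ?h < 1" by simp
    have "norm (binv (x + ?h) - binv x) \<le> ?n * ((?n * norm ?h) / (1 - ?n * norm ?h))"
      using inv_perturb[OF ix sm] by blast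
    also have "\<dots> \<le> ?n * ((?n * norm ?h) / (1/2))"
      using t1 by (intro mult_left_mono divide_left_mono) (auto intro: mult_nonneg_nonneg)
    also have "\<dots> = 2 * ?n * ?n * norm ?h" by simp
    also have "\<dots> \<le> 2 * (?n + 1)^2 * norm ?h"
      by (intro mult_right_mono) (auto simp: power2_eq_square intro: mult_mono)
    also have "\<dots> < 2 * (?n + 1)^2 * (e / (2 * (?n + 1)^2))"
      using h d_def by (intro mult_strict_left_mono) (auto simp: add_pos_nonneg)
    also have "\<dots> = e" using np by (simp add: field_simps)
    finally have "dist (binv x') (binv x) < e" by (simp add: dist_norm) }
  then show "\<exists>d>0. \<forall>x'. dist x' x < d \<longrightarrow> dist (binv x') (binv x) < e" using d by blast
qed

lemma continuous_on_binv:
  fixes f :: "'b::topological_space \<Rightarrow> 'a::{real_normed_algebra_1,banach}"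
  assumes "continuous_on S f" "\<And>s. s \<in> S \<Longrightarrow> invertible_el (f s)"
  shows "continuous_on S (\<lambda>s. binv (f s))"
proof -
  have "continuous_on (f ` S) binv"
    by (rule continuous_at_imp_continuous_on) (use assms isCont_binv in auto)
  from continuous_on_compose[OF assms(1) this] show ?thesis by (simp add: o_def)
qed


definition rou :: "nat \<Rightarrow> complex" where "rou m = exp (2 * pi * \<i> / of_nat m)"

lemma rou_pow_m: "m > 0 \<Longrightarrow> rou m ^ m = 1"
proof -
  assume m: "m > 0"
  have "rou m ^ m = exp (of_nat m * (2 * pi * \<i> / of_nat m))"
    unfolding rou_def by (rule exp_of_nat_mult[symmetric])
  also have "\<dots> = exp (2 * pi * \<i>)" using m by simp
  finally show ?thesis by simp
qed

lemma rou_norm: "cmod (rou m ^ j) = 1"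
  unfolding rou_def by (simp add: norm_power norm_exp_eq_Re)

lemma rou_pow_ne1:
  assumes "0 < l" "l < m"
  shows "rou m ^ l \<noteq> 1"
proof
  assume h: "rou m ^ l = 1"
  have "rou m ^ l = exp (of_nat l * (2 * pi * \<i> / of_nat m))"
    unfolding rou_def by (rule exp_of_nat_mult[symmetric])
  then have "exp (of_nat l * (2 * pi * \<i> / of_nat m)) = 1" using h by simp
  then obtain n :: int where n0: "Im (of_nat l * (2 * pi * \<i> / of_nat m)) = real_of_int (2 * n) * pi"
    unfolding exp_eq_1 by blast
  then have n: "Im (of_nat l * (2 * pi * \<i> / of_nat m)) = 2 * pi * of_int n" by simp
  have "Im (of_nat l * (2 * pi * \<i> / of_nat m)) = 2 * pi * (real l / real m)"
    using assms by (simp add: Im_divide power2_eq_square)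
  with n have "2 * pi * (real l / real m) = 2 * pi * of_int n" by simp
  then have "real l / real m = of_int n" using pi_gt_zero by (simp only: mult_cancel_left) simp
  moreover have "0 < real l / real m" "real l / real m < 1" using assms by auto
  ultimately show False by (metis of_int_0_less_iff of_int_less_1_iff not_less zero_less_one_class.zero_le_one less_le_trans linorder_not_le int_one_le_iff_zero_less)
qed

lemma rou_sum:
  assumes m: "m > 0" and "l < m"
  shows "(\<Sum>j<m. (rou m ^ j) ^ l) = (if l = 0 then of_nat m else 0)"
proof (cases "l = 0")
  case False
  then have ne: "rou m ^ l \<noteq> 1" using rou_pow_ne1 assms by auto
  have "(\<Sum>j<m. (rou m ^ j) ^ l) = (\<Sum>j<m. (rou m ^ l) ^ j)"
    by (simp add: power_mult[symmetric] mult.commute)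
  also have "\<dots> = ((rou m ^ l) ^ m - 1) / (rou m ^ l - 1)" by (rule geometric_sum[OF ne])
  also have "(rou m ^ l) ^ m = 1" using rou_pow_m[OF m] by (metis power_mult mult.commute power_one)
  finally show ?thesis using False by simp
qed simp

lemma avg_inv:
  fixes x :: "'a::complex_banach_algebra_1"
  assumes m: "m > 0" and inv: "\<And>j. j < m \<Longrightarrow> invertible_el (1 - scaleC (rou m ^ j) x)"
  shows "invertible_el (1 - x ^ m) \<and>
         binv (1 - x ^ m) = scaleC (1 / of_nat m) (\<Sum>j<m. binv (1 - scaleC (rou m ^ j) x))"
proof -
  define z where "z j = scaleC (rou m ^ j) x" for j
  define y where "y j = binv (1 - z j)" for j
  define S where "S j = (\<Sum>l<m. z j ^ l)" for j
  have zm: "z j ^ m = x ^ m" for j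
  proof -
    have "(rou m ^ j) ^ m = 1" using rou_pow_m[OF m] by (metis power_mult mult.commute power_one)
    then show ?thesis unfolding z_def sC_power by (simp add: scaleC_one)
  qed
  have yl: "y j * (1 - x^m) = S j" and yr: "(1 - x^m) * y j = S j" if j: "j < m" for j
  proof -
    have iv: "(1 - z j) * y j = 1" "y j * (1 - z j) = 1" using binv[OF inv[OF j]] unfolding y_def z_def by auto
    have f1: "(1 - z j) * S j = 1 - x^m" "S j * (1 - z j) = 1 - x^m"
      unfolding S_def using geom_factor[of "z j" m] zm by auto
    show "y j * (1 - x^m) = S j" using f1(1) iv(2) by (metis mult.assoc mult_1_left)
    show "(1 - x^m) * y j = S j" using f1(2) iv(1) by (metis mult.assoc mult_1_right)
  qed
  have sumS: "(\<Sum>j<m. S j) = scaleC (of_nat m) 1"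
  proof -
    have "(\<Sum>j<m. S j) = (\<Sum>l<m. \<Sum>j<m. z j ^ l)" unfolding S_def by (rule sum.swap)
    also have "\<dots> = (\<Sum>l<m. scaleC (\<Sum>j<m. (rou m ^ j) ^ l) (x ^ l))"
      unfolding z_def sC_power sC_sum_left by simp
    also have "\<dots> = (\<Sum>l<m. if l = 0 then scaleC (of_nat m) 1 else 0)"
      by (rule sum.cong) (auto simp: rou_sum[OF m])
    also have "\<dots> = scaleC (of_nat m) 1" using m by simp
    finally show ?thesis .
  qed
  define Y where "Y = scaleC (1 / of_nat m) (\<Sum>j<m. y j)"
  have "(1 - x^m) * Y = scaleC (1 / of_nat m) (\<Sum>j<m. (1 - x^m) * y j)"
    unfolding Y_def by (simp add: mult_scaleC_right sum_distrib_left)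
  also have "\<dots> = scaleC (1 / of_nat m) (\<Sum>j<m. S j)" using yr by simp
  also have "\<dots> = 1" using m by (simp add: sumS scaleC_scaleC scaleC_one)
  finally have l: "(1 - x^m) * Y = 1" .
  have "Y * (1 - x^m) = scaleC (1 / of_nat m) (\<Sum>j<m. y j * (1 - x^m))"
    unfolding Y_def by (simp add: mult_scaleC_left sum_distrib_right)
  also have "\<dots> = scaleC (1 / of_nat m) (\<Sum>j<m. S j)" using yl by simp
  also have "\<dots> = 1" using m by (simp add: sumS scaleC_scaleC scaleC_one)
  finally have r: "Y * (1 - x^m) = 1" .
  show ?thesis using invertible_I[OF l r] binv_unique[OF l r] unfolding Y_def y_def z_def by simp
qed


lemma key_ineq:
  fixes u :: "'a::complex_banach_algebra_1" and c :: real
  assumes c: "0 \<le> c" "c \<le> 1/2"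
    and i1: "invertible_el (1 - u)" and i2: "invertible_el (1 - scaleC (of_real c) u)"
    and d: "norm (binv (1 - u) - binv (1 - scaleC (of_real c) u)) \<le> 1/16"
  shows "norm u \<noteq> 1"
proof
  assume nu: "norm u = 1"
  let ?v = "scaleC (of_real c) u"
  let ?g = "binv (1 - u)" and ?g' = "binv (1 - ?v)"
  have g: "(1 - u) * ?g = 1" "?g * (1 - u) = 1" using binv[OF i1] by auto
  have g': "(1 - ?v) * ?g' = 1" "?g' * (1 - ?v) = 1" using binv[OF i2] by auto
  have "?g - ?g' = ?g * (1 - ?v) * ?g' - ?g * (1 - u) * ?g'"
    using g g' by (simp add: mult.assoc)
  also have "\<dots> = ?g * ((1 - ?v) - (1 - u)) * ?g'" by (simp add: algebra_simps)
  also have "(1 - ?v) - (1 - u) = scaleC (1 - of_real c) u" by (simp add: sC_diff_left scaleC_one)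
  finally have gg: "?g - ?g' = scaleC (1 - of_real c) (?g * u * ?g')"
    by (simp add: mult_scaleC_left mult_scaleC_right)
  have "norm (?g - ?g') = (1 - c) * norm (?g * u * ?g')"
    unfolding gg norm_scaleC using c by (simp add: cmod_eq_Re)
  then have "(1 - c) * norm (?g * u * ?g') \<le> 1/16" using d by simp
  moreover have "(1/2) * norm (?g * u * ?g') \<le> (1 - c) * norm (?g * u * ?g')"
    by (rule mult_right_mono) (use c in auto)
  ultimately have w: "norm (?g * u * ?g') \<le> 1/8" by linarith
  have "(1 - u) * (?g * u * ?g') * (1 - ?v) = ((1 - u) * ?g) * u * (?g' * (1 - ?v))"
    by (simp only: mult.assoc)
  also have "\<dots> = u" using g(1) g'(2) by simp
  finally have ueq: "u = (1 - u) * (?g * u * ?g') * (1 - ?v)" by simp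
  have "norm ((1 - u) * (?g * u * ?g') * (1 - ?v)) \<le> norm ((1 - u) * (?g * u * ?g')) * norm (1 - ?v)"
    by (rule norm_mult_ineq)
  also have "\<dots> \<le> norm (1 - u) * norm (?g * u * ?g') * norm (1 - ?v)"
    by (rule mult_right_mono[OF norm_mult_ineq norm_ge_zero])
  finally have "norm u \<le> norm (1 - u) * norm (?g * u * ?g') * norm (1 - ?v)"
    using ueq by simp
  also have "\<dots> \<le> 2 * (1/8) * (3/2)"
  proof (intro mult_mono)
    show "norm (1 - u) \<le> 2" using norm_triangle_ineq4[of 1 u] nu by simp
    have "norm ?v \<le> 1/2" using c nu by (simp add: norm_scaleC)
    then show "norm (1 - ?v) \<le> 3/2" using norm_triangle_ineq4[of 1 ?v] by simp
  qed (use w in auto)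
  finally show False using nu by simp
qed

lemma bounded_linear_sC: "bounded_linear (\<lambda>\<mu>::complex. scaleC \<mu> (e::'a::complex_banach_algebra_1))"
proof (rule bounded_linear_intro[where K = "norm e"])
  fix x y :: complex and r :: real
  show "scaleC (x + y) e = scaleC x e + scaleC y e" by (rule scaleC_add_left)
  show "scaleC (r *\<^sub>R x) e = r *\<^sub>R scaleC x e"
    by (simp add: scaleR_conv_of_real scaleC_scaleC[symmetric] scaleC_of_real)
  show "norm (scaleC x e) \<le> norm x * norm e" by (simp add: norm_scaleC)
qed

lemma cont_sC: "continuous_on S (\<lambda>\<mu>::complex. scaleC \<mu> (e::'a::complex_banach_algebra_1))"
  using bounded_linear_sC linear_continuous_on by blast


lemma qnil_decay:
  fixes e :: "'a::complex_banach_algebra_1"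
  assumes H: "\<And>\<mu>. \<mu> \<noteq> 0 \<Longrightarrow> invertible_el (scaleC \<mu> 1 - e)"
    and r: "r > 0"
  shows "\<exists>m0. \<forall>m\<ge>m0. norm (e ^ m) \<le> r ^ m"
proof -
  define R where "R = 1 / r"
  have R: "R > 0" unfolding R_def using r by simp
  define F where "F \<mu> = 1 - scaleC \<mu> e" for \<mu>
  have invF: "invertible_el (F \<mu>)" for \<mu>
  proof (cases "\<mu> = 0")
    case True then show ?thesis unfolding F_def by simp
  next
    case False
    have "F \<mu> = scaleC \<mu> (scaleC (1/\<mu>) 1 - e)"
      unfolding F_def using False by (simp add: sC_diff_right scaleC_scaleC scaleC_one)
    then show ?thesis using inv_sC[OF False H[of "1/\<mu>"]] False by simp
  qed
  define f where "f \<mu> = binv (F \<mu>)" for \<mu>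
  have cF: "continuous_on UNIV F" unfolding F_def by (intro continuous_intros cont_sC)
  have cf: "continuous_on UNIV f" unfolding f_def by (rule continuous_on_binv[OF cF invF])
  have "uniformly_continuous_on (cball 0 R) f"
    by (rule compact_uniformly_continuous[OF continuous_on_subset[OF cf] compact_cball]) simp
  then obtain \<delta> where \<delta>: "\<delta> > 0"
    and uc: "\<And>x x'. x \<in> cball 0 R \<Longrightarrow> x' \<in> cball 0 R \<Longrightarrow> dist x' x < \<delta> \<Longrightarrow> dist (f x') (f x) < 1/16"
    unfolding uniformly_continuous_on_def by (meson divide_pos_pos zero_less_numeral zero_less_one)
  define \<eta> where "\<eta> = min (1/2) (\<delta> / (2 * R))"
  have \<eta>: "0 < \<eta>" "\<eta> \<le> 1/2" "R * \<eta> \<le> \<delta> / 2"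
    unfolding \<eta>_def using \<delta> R by (auto simp: min_def field_simps)
  obtain m1 where m1: "(1 - \<eta>) ^ m1 < 1/2"
    using real_arch_pow_inv[of "1/2" "1 - \<eta>"] \<eta> by auto
  show ?thesis
  proof (intro exI[of _ "max 1 m1"] allI impI)
    fix m assume mm: "max 1 m1 \<le> m"
    then have m: "m > 0" "m1 \<le> m" by auto
    define c where "c = (1 - \<eta>) ^ m"
    have c: "0 \<le> c" "c \<le> 1/2"
    proof -
      show "0 \<le> c" unfolding c_def using \<eta> by simp
      have "c \<le> (1 - \<eta>) ^ m1" unfolding c_def by (rule power_decreasing[OF m(2)]) (use \<eta> in auto)
      then show "c \<le> 1/2" using m1 by simp
    qed
    define \<phi> where "\<phi> \<rho> = \<rho> ^ m * norm (e ^ m)" for \<rho> :: real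
    have ne1: "\<phi> \<rho> \<noteq> 1" if \<rho>: "0 \<le> \<rho>" "\<rho> \<le> R" for \<rho>
    proof -
      define \<mu> where "\<mu> = complex_of_real \<rho>"
      define \<mu>' where "\<mu>' = complex_of_real (\<rho> * (1 - \<eta>))"
      have avg: "invertible_el (1 - (scaleC \<nu> e) ^ m) \<and>
                 binv (1 - (scaleC \<nu> e) ^ m) = scaleC (1 / of_nat m) (\<Sum>j<m. f (rou m ^ j * \<nu>))" for \<nu>
      proof -
        have eq: "1 - scaleC (rou m ^ j) (scaleC \<nu> e) = F (rou m ^ j * \<nu>)" for j
          unfolding F_def by (simp add: scaleC_scaleC)
        show ?thesis using avg_inv[OF m(1), of "scaleC \<nu> e"] invF unfolding eq f_def by simp
      qed
      define u where "u = scaleC (\<mu> ^ m) (e ^ m)"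
      have u1: "(scaleC \<mu> e) ^ m = u" unfolding u_def by (rule sC_power)
      have u2: "(scaleC \<mu>' e) ^ m = scaleC (of_real c) u"
        unfolding u_def sC_power scaleC_scaleC c_def \<mu>'_def \<mu>_def
        by (simp add: power_mult_distrib mult.commute)
      have i1: "invertible_el (1 - u)" and g1: "binv (1 - u) = scaleC (1 / of_nat m) (\<Sum>j<m. f (rou m ^ j * \<mu>))"
        using avg[of \<mu>] u1 by auto
      have i2: "invertible_el (1 - scaleC (of_real c) u)"
        and g2: "binv (1 - scaleC (of_real c) u) = scaleC (1 / of_nat m) (\<Sum>j<m. f (rou m ^ j * \<mu>'))"
        using avg[of \<mu>'] u2 by auto
      have each: "norm (f (rou m ^ j * \<mu>) - f (rou m ^ j * \<mu>')) \<le> 1/16" for j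
      proof -
        have n1: "cmod (rou m ^ j * \<mu>) = \<rho>" unfolding \<mu>_def norm_mult rou_norm using \<rho> by simp
        have n2: "cmod (rou m ^ j * \<mu>') = \<rho> * (1 - \<eta>)" unfolding \<mu>'_def norm_mult rou_norm norm_of_real using \<rho> \<eta> by simp
        have "\<rho> * (1 - \<eta>) \<le> R" using \<rho> \<eta> by (smt (verit) mult_left_le mult_nonneg_nonneg)
        then have mem: "rou m ^ j * \<mu> \<in> cball 0 R" "rou m ^ j * \<mu>' \<in> cball 0 R"
          using n1 n2 \<rho> by auto
        have "dist (rou m ^ j * \<mu>) (rou m ^ j * \<mu>') = cmod (rou m ^ j * (\<mu> - \<mu>'))"
          by (simp add: dist_norm algebra_simps)
        also have "\<dots> = \<rho> * \<eta>" unfolding norm_mult rou_norm \<mu>_def \<mu>'_def using \<rho> \<eta>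
          by (simp add: algebra_simps flip: of_real_diff of_real_mult)
        also have "\<dots> \<le> R * \<eta>" using \<rho> \<eta> by (simp add: mult_right_mono)
        also have "\<dots> < \<delta>" using \<eta> \<delta> by simp
        finally have "dist (f (rou m ^ j * \<mu>)) (f (rou m ^ j * \<mu>')) < 1/16" using uc mem by blast
        then show ?thesis by (simp add: dist_norm)
      qed
      have "binv (1 - u) - binv (1 - scaleC (of_real c) u)
            = scaleC (1 / of_nat m) (\<Sum>j<m. f (rou m ^ j * \<mu>) - f (rou m ^ j * \<mu>'))"
        unfolding g1 g2 by (simp add: sC_diff_right sum_subtractf)
      then have "norm (binv (1 - u) - binv (1 - scaleC (of_real c) u))
            = (1 / real m) * norm (\<Sum>j<m. f (rou m ^ j * \<mu>) - f (rou m ^ j * \<mu>'))"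
        by (simp add: norm_scaleC norm_divide)
      also have "\<dots> \<le> (1 / real m) * (\<Sum>j<m. norm (f (rou m ^ j * \<mu>) - f (rou m ^ j * \<mu>')))"
        by (intro mult_left_mono norm_sum) simp
      also have "\<dots> \<le> (1 / real m) * (\<Sum>j<m. 1/16)"
        by (intro mult_left_mono sum_mono each) simp
      also have "\<dots> = 1/16" using m by simp
      finally have "norm u \<noteq> 1" by (intro key_ineq[OF c i1 i2])
      moreover have "norm u = \<phi> \<rho>" unfolding u_def \<phi>_def \<mu>_def
        using \<rho> by (simp add: norm_scaleC norm_power)
      ultimately show ?thesis by simp
    qed
    have "\<phi> R \<le> 1"
    proof (rule ccontr)
      assume "\<not> \<phi> R \<le> 1"
      then have "1 \<le> \<phi> R" by simp
      moreover have "\<phi> 0 \<le> 1" unfolding \<phi>_def using m by (simp add: zero_power)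
      moreover have "continuous_on {0..R} \<phi>" unfolding \<phi>_def by (intro continuous_intros)
      ultimately obtain \<rho> where "0 \<le> \<rho>" "\<rho> \<le> R" "\<phi> \<rho> = 1"
        using IVT'[of \<phi> 0 1 R] R by auto
      then show False using ne1 by blast
    qed
    then have "R ^ m * norm (e ^ m) \<le> 1" unfolding \<phi>_def .
    then show "norm (e ^ m) \<le> r ^ m" unfolding R_def using r
      by (simp add: power_divide field_simps)
  qed
qed


lemma comm_pow: "(x::'a::ring_1) * y = y * x \<Longrightarrow> x ^ m * y = y * x ^ m"
proof (induction m)
  case (Suc m)
  have "x ^ Suc m * y = x * (x ^ m * y)" by (simp add: mult.assoc)
  also have "\<dots> = x * (y * x ^ m)" using Suc by simp
  also have "\<dots> = y * x ^ Suc m" using Suc.prems by (simp add: mult.assoc[symmetric])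
  finally show ?case .
qed simp

lemma comm_pow2: "(x::'a::ring_1) * y = y * x \<Longrightarrow> x ^ m * y ^ k = y ^ k * x ^ m"
  by (metis comm_pow)

lemma pow_mult_comm: "(x::'a::ring_1) * y = y * x \<Longrightarrow> (x * y) ^ m = x ^ m * y ^ m"
proof (induction m)
  case (Suc m)
  have "(x * y) ^ Suc m = x * y * (x ^ m * y ^ m)" using Suc by simp
  also have "\<dots> = x * (y * x ^ m) * y ^ m" by (simp add: mult.assoc)
  also have "\<dots> = x * (x ^ m * y) * y ^ m" using comm_pow[OF Suc.prems] by simp
  also have "\<dots> = x ^ Suc m * y ^ Suc m" by (simp add: mult.assoc)
  finally show ?case .
qed simp

definition Nq :: "'a::real_normed_algebra_1 \<Rightarrow> bool" where
  "Nq v \<longleftrightarrow> (\<forall>r>0. \<exists>m0. \<forall>m\<ge>m0. norm (v ^ m) \<le> r ^ m)"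

lemma spectrum_iff: "(\<mu>::complex) \<in> spectrum (a::'a::complex_banach_algebra_1) \<longleftrightarrow> \<not> invertible_el (scaleC \<mu> 1 - a)"
  unfolding spectrum_def by simp

lemma qnil_inv: "quasinilpotent (v::'a::complex_banach_algebra_1) \<Longrightarrow> \<mu> \<noteq> 0 \<Longrightarrow> invertible_el (scaleC \<mu> 1 - v)"
  unfolding quasinilpotent_def using spectrum_iff by blast

lemma qnil_not_inv: "quasinilpotent (v::'a::complex_banach_algebra_1) \<Longrightarrow> \<not> invertible_el v"
proof -
  assume "quasinilpotent v"
  then have "0 \<in> spectrum v" unfolding quasinilpotent_def by simp
  then have "\<not> invertible_el (- v)" unfolding spectrum_iff by simp
  then show ?thesis using inv_minus by blast
qed

lemma qnil_Nq: "quasinilpotent (v::'a::complex_banach_algebra_1) \<Longrightarrow> Nq v"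
  unfolding Nq_def using qnil_decay qnil_inv by blast

lemma Nq_inv:
  fixes v :: "'a::complex_banach_algebra_1"
  assumes N: "Nq v" and mu: "\<mu> \<noteq> 0"
  shows "invertible_el (scaleC \<mu> 1 - v)"
proof -
  obtain m0 where m0: "\<forall>m\<ge>m0. norm (v ^ m) \<le> (cmod \<mu> / 2) ^ m"
    using N mu unfolding Nq_def by (meson divide_pos_pos zero_less_norm_iff zero_less_numeral)
  define m where "m = Suc m0"
  have vm: "norm (v ^ m) \<le> (cmod \<mu> / 2) ^ m" using m0 m_def le_Suc_eq by blast
  define w where "w = scaleC (1/\<mu>) v"
  have "norm (w ^ m) = norm (v ^ m) / cmod \<mu> ^ m"
    unfolding w_def sC_power by (simp add: norm_scaleC norm_divide norm_power power_one_over)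
  also have "\<dots> \<le> (cmod \<mu> / 2) ^ m / cmod \<mu> ^ m"
    using vm mu by (simp add: divide_right_mono)
  also have "\<dots> = (1/2) ^ m" using mu by (simp add: power_divide)
  also have "\<dots> \<le> 1/2" unfolding m_def by (simp add: power_le_one)
  finally have "norm (w ^ m) < 1" by simp
  then have "invertible_el (1 - w ^ m)" using neumann by blast
  then have "invertible_el (1 - w)" by (rule inv_pow_factor)
  then have "invertible_el (scaleC \<mu> (1 - w))" using inv_sC mu by blast
  moreover have "scaleC \<mu> (1 - w) = scaleC \<mu> 1 - v"
    unfolding w_def using mu by (simp add: sC_diff_right scaleC_scaleC scaleC_one)
  ultimately show ?thesis by simp
qed

lemma Nq_not_inv:
  fixes v :: "'a::complex_banach_algebra_1"
  assumes N: "Nq v"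
  shows "\<not> invertible_el v"
proof
  assume "invertible_el v"
  then obtain y where y: "v * y = 1" "y * v = 1" unfolding invertible_el_def by blast
  have vy: "v ^ m * y ^ m = 1" for m
  proof (induction m)
    case (Suc m)
    have "v ^ Suc m * y ^ Suc m = (v ^ m * v) * (y * y ^ m)" by (metis power_Suc power_Suc2)
    also have "\<dots> = v ^ m * (v * y) * y ^ m" by (simp only: mult.assoc)
    also have "\<dots> = 1" using Suc y by simp
    finally show ?case .
  qed simp
  define r where "r = 1 / (2 * (norm y + 1))"
  have "2 * (norm y + 1) > 0" by (smt (verit) norm_ge_zero)
  then have r: "r > 0" unfolding r_def by simp
  obtain m0 where m0: "\<forall>m\<ge>m0. norm (v ^ m) \<le> r ^ m" using N r unfolding Nq_def by blast
  define m where "m = Suc m0"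
  have "1 = norm (v ^ m * y ^ m)" using vy by simp
  also have "\<dots> \<le> norm (v ^ m) * norm (y ^ m)" by (rule norm_mult_ineq)
  also have "\<dots> \<le> r ^ m * norm y ^ m"
  proof (intro mult_mono norm_power_ineq)
    show "norm (v ^ m) \<le> r ^ m" using m0 m_def le_Suc_eq by blast
    show "0 \<le> r ^ m" using r by simp
  qed simp
  also have "\<dots> = (r * norm y) ^ m" by (simp add: power_mult_distrib)
  also have "\<dots> < 1"
  proof -
    have p: "0 < 2 * (norm y + 1)" by (smt (verit) norm_ge_zero)
    have "r * norm y = norm y / (2 * (norm y + 1))" unfolding r_def by simp
    also have "\<dots> < 1" using p by (simp add: divide_less_eq)
    finally have "r * norm y < 1" .
    moreover have "0 \<le> r * norm y" using r by simp
    ultimately have "(r * norm y) ^ m0 \<le> 1" by (intro power_le_one) auto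
    then have "r * norm y * (r * norm y) ^ m0 \<le> r * norm y" using \<open>0 \<le> r * norm y\<close> by (rule mult_left_le)
    then show ?thesis unfolding m_def using \<open>r * norm y < 1\<close> by simp
  qed
  finally show False by simp
qed

lemma Nq_qnil: "Nq (v::'a::complex_banach_algebra_1) \<Longrightarrow> quasinilpotent v"
proof -
  assume N: "Nq v"
  have "spectrum v = {0}"
  proof (intro set_eqI iffI)
    fix \<mu> :: complex assume "\<mu> \<in> spectrum v"
    then show "\<mu> \<in> {0}" using Nq_inv[OF N] spectrum_iff by auto
  next
    fix \<mu> :: complex assume "\<mu> \<in> {0}"
    then show "\<mu> \<in> spectrum v" using Nq_not_inv[OF N] inv_minus spectrum_iff by fastforce
  qed
  then show ?thesis unfolding quasinilpotent_def .
qed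

lemma Nq_mult:
  fixes v k :: "'a::complex_banach_algebra_1"
  assumes N: "Nq v" and c: "v * k = k * v"
  shows "Nq (v * k)"
  unfolding Nq_def
proof (intro allI impI)
  fix r :: real assume r: "r > 0"
  define r' where "r' = r / (norm k + 1)"
  have nk: "norm k + 1 > 0" using norm_ge_zero[of k] by linarith
  have r': "r' > 0" unfolding r'_def using r nk by simp
  obtain m0 where m0: "\<forall>m\<ge>m0. norm (v ^ m) \<le> r' ^ m" using N r' unfolding Nq_def by blast
  have "norm ((v * k) ^ m) \<le> r ^ m" if "m \<ge> m0" for m
  proof -
    have "norm ((v * k) ^ m) = norm (v ^ m * k ^ m)" using pow_mult_comm[OF c] by simp
    also have "\<dots> \<le> norm (v ^ m) * norm (k ^ m)" by (rule norm_mult_ineq)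
    also have "\<dots> \<le> r' ^ m * norm k ^ m" using m0 that r' by (intro mult_mono norm_power_ineq) auto
    also have "\<dots> = (r' * norm k) ^ m" by (simp add: power_mult_distrib)
    also have "\<dots> \<le> r ^ m"
    proof (rule power_mono)
      have "r' * norm k \<le> r' * (norm k + 1)" using r' by simp
      also have "\<dots> = r" unfolding r'_def using nk by simp
      finally show "r' * norm k \<le> r" .
    qed (use r' in simp)
    finally show ?thesis .
  qed
  then show "\<exists>m0. \<forall>m\<ge>m0. norm ((v * k) ^ m) \<le> r ^ m" by blast
qed

lemma Nq_mult_left: "Nq (v::'a::complex_banach_algebra_1) \<Longrightarrow> v * k = k * v \<Longrightarrow> Nq (k * v)"
  using Nq_mult by metis

lemma Nq_pow_qnil:
  fixes v :: "'a::complex_banach_algebra_1"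
  assumes N: "Nq (v ^ n)" and n: "n > 0"
  shows "quasinilpotent v"
proof -
  have "spectrum v = {0}"
  proof (intro set_eqI iffI)
    fix \<mu> :: complex assume sp: "\<mu> \<in> spectrum v"
    show "\<mu> \<in> {0}"
    proof (rule ccontr)
      assume "\<mu> \<notin> {0}"
      then have mu: "\<mu> \<noteq> 0" by simp
      have "invertible_el (scaleC (\<mu> ^ n) 1 - v ^ n)" using Nq_inv[OF N] mu by simp
      then have "invertible_el (scaleC (1 / \<mu> ^ n) (scaleC (\<mu> ^ n) 1 - v ^ n))"
        by (intro inv_sC) (use mu in simp_all)
      moreover have "scaleC (1 / \<mu> ^ n) (scaleC (\<mu> ^ n) 1 - v ^ n) = 1 - (scaleC (1/\<mu>) v) ^ n"
        using mu by (simp add: sC_diff_right scaleC_scaleC scaleC_one sC_power power_one_over)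
      ultimately have "invertible_el (1 - scaleC (1/\<mu>) v)" using inv_pow_factor by metis
      then have "invertible_el (scaleC \<mu> (1 - scaleC (1/\<mu>) v))" using mu inv_sC by blast
      moreover have "scaleC \<mu> (1 - scaleC (1/\<mu>) v) = scaleC \<mu> 1 - v"
        using mu by (simp add: sC_diff_right scaleC_scaleC scaleC_one)
      ultimately show False using sp spectrum_iff by auto
    qed
  next
    fix \<mu> :: complex assume "\<mu> \<in> {0}"
    then have m0: "\<mu> = 0" by simp
    have "\<not> invertible_el v" using Nq_not_inv[OF N] inv_power by blast
    then show "\<mu> \<in> spectrum v" using m0 inv_minus spectrum_iff by fastforce
  qed
  then show ?thesis unfolding quasinilpotent_def .
qed


definition dc :: "'a::complex_banach_algebra_1 set \<Rightarrow> 'a set" where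
  "dc S = {y. \<forall>z. (\<forall>s\<in>S. z * s = s * z) \<longrightarrow> y * z = z * y}"

lemma dc_mem: "s \<in> S \<Longrightarrow> s \<in> dc S" unfolding dc_def by auto
lemma dc_one[simp]: "1 \<in> dc S" unfolding dc_def by auto
lemma dc_zero[simp]: "0 \<in> dc S" unfolding dc_def by auto
lemma dc_add[simp]: "y \<in> dc S \<Longrightarrow> w \<in> dc S \<Longrightarrow> y + w \<in> dc S"
  unfolding dc_def by (auto simp: distrib_left distrib_right)
lemma dc_minus[simp]: "y \<in> dc S \<Longrightarrow> - y \<in> dc S"
  unfolding dc_def by auto
lemma dc_diff[simp]: "y \<in> dc S \<Longrightarrow> w \<in> dc S \<Longrightarrow> y - w \<in> dc S"
  unfolding dc_def by (auto simp: left_diff_distrib right_diff_distrib)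
lemma dc_mult[simp]: "y \<in> dc S \<Longrightarrow> w \<in> dc S \<Longrightarrow> y * w \<in> dc S"
proof -
  assume y: "y \<in> dc S" and w: "w \<in> dc S"
  { fix z assume z: "\<forall>s\<in>S. z * s = s * z"
    have yz: "y * z = z * y" using y z unfolding dc_def by blast
    have wz: "w * z = z * w" using w z unfolding dc_def by blast
    have "y * w * z = y * (w * z)" by (simp add: mult.assoc)
    also have "\<dots> = (y * z) * w" using wz by (simp add: mult.assoc)
    also have "\<dots> = z * (y * w)" using yz by (simp add: mult.assoc)
    finally have "y * w * z = z * (y * w)" . }
  then show ?thesis unfolding dc_def by blast
qed
lemma dc_sC[simp]: "y \<in> dc S \<Longrightarrow> scaleC c y \<in> dc S"
  unfolding dc_def by (auto simp: mult_scaleC_left mult_scaleC_right)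
lemma dc_pow[simp]: "y \<in> dc S \<Longrightarrow> y ^ k \<in> dc S"
  by (induction k) auto
lemma dc_sum[simp]: "(\<And>i. f i \<in> dc S) \<Longrightarrow> sum f I \<in> dc S"
  by (induction I rule: infinite_finite_induct) auto
lemma dc_binv[simp]: "invertible_el y \<Longrightarrow> y \<in> dc S \<Longrightarrow> binv y \<in> dc S"
proof -
  assume i: "invertible_el y" and y: "y \<in> dc S"
  { fix z assume z: "\<forall>s\<in>S. z * s = s * z"
    have "z * y = y * z" using y z unfolding dc_def by auto
    then have "z * binv y = binv y * z" by (rule comm_binv[OF i])
    then have "binv y * z = z * binv y" by simp }
  then show ?thesis unfolding dc_def by blast
qed
lemma dc_suminf:
  assumes "summable f" "\<And>i. f i \<in> dc S"
  shows "suminf f \<in> dc S"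
  unfolding dc_def
proof (intro CollectI allI impI)
  fix z assume z: "\<forall>s\<in>S. z * s = s * z"
  have "f i * z = z * f i" for i using assms(2)[of i] z unfolding dc_def by auto
  then show "suminf f * z = z * suminf f"
    using suminf_mult[OF assms(1), of z] suminf_mult2[OF assms(1), of z] by simp
qed

lemma dc_comm:
  assumes S: "\<And>s t. s \<in> S \<Longrightarrow> t \<in> S \<Longrightarrow> s * t = t * s"
    and y: "y \<in> dc S" and w: "w \<in> dc S"
  shows "y * w = w * y"
proof -
  have "\<forall>s\<in>S. w * s = s * w"
  proof
    fix s assume s: "s \<in> S"
    have "\<forall>t\<in>S. s * t = t * s" using S s by auto
    then show "w * s = s * w" using w unfolding dc_def by auto
  qed
  then show ?thesis using y unfolding dc_def by auto
qed


lemma gpi_spec: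
  fixes a x :: "'a::complex_banach_algebra_1"
  assumes xax: "x * a * x = x" and ax: "a * x = x * a"
    and q: "quasinilpotent (a - a ^ (n + 2) * x)"
    and l0: "t \<noteq> 0" and ln: "t ^ n \<noteq> 1"
  shows "invertible_el (scaleC t 1 - a)"
proof -
  define S where "S = {a, x}"
  have Sc: "\<And>s t. s \<in> S \<Longrightarrow> t \<in> S \<Longrightarrow> s * t = t * s" unfolding S_def using ax by auto
  have aD[simp]: "a \<in> dc S" and xD[simp]: "x \<in> dc S" unfolding S_def by (auto intro: dc_mem)
  have cm: "y \<in> dc S \<Longrightarrow> w \<in> dc S \<Longrightarrow> y * w = w * y" for y w by (rule dc_comm[OF Sc])
  define p where "p = a * x"
  define qq where "qq = a - a ^ (n + 2) * x"
  define L where "L = scaleC t (1::'a)"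
  define \<mu> where "\<mu> = t - t ^ (n + 1)"
  define M where "M = scaleC \<mu> (1::'a)"
  have pD[simp]: "p \<in> dc S" and qD[simp]: "qq \<in> dc S" and LD[simp]: "L \<in> dc S" and MD[simp]: "M \<in> dc S"
    unfolding p_def qq_def L_def M_def by simp_all
  have mu0: "\<mu> \<noteq> 0"
  proof
    assume "\<mu> = 0"
    then have "t * (1 - t ^ n) = 0" unfolding \<mu>_def by (simp add: algebra_simps)
    then show False using l0 ln by simp
  qed
  have i1: "invertible_el (L - qq)" unfolding L_def qq_def using qnil_inv[OF q l0] .
  have i2: "invertible_el (M - qq)" unfolding M_def qq_def using qnil_inv[OF q mu0] .
  define k1 where "k1 = binv (L - qq)"
  define k2 where "k2 = binv (M - qq)"
  have k1D[simp]: "k1 \<in> dc S" and k2D[simp]: "k2 \<in> dc S" unfolding k1_def k2_def using i1 i2 by simp_all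
  have k1: "(L - qq) * k1 = 1" and k2: "(M - qq) * k2 = 1" unfolding k1_def k2_def using binv i1 i2 by auto
  have xp: "x * p = x" unfolding p_def using xax by (simp add: mult.assoc)
  have pp: "p * p = p" unfolding p_def using xax by (metis mult.assoc)
  have x1p: "x * (1 - p) = 0" using xp by (simp add: right_diff_distrib)
  have R1: "(L - qq) * (1 - p) = (L - a) * (1 - p)"
  proof -
    have "qq * (1 - p) = a * (1 - p) - a ^ (n + 2) * (x * (1 - p))"
      unfolding qq_def by (simp add: left_diff_distrib mult.assoc)
    then have "qq * (1 - p) = a * (1 - p)" using x1p by simp
    then show ?thesis by (simp add: left_diff_distrib)
  qed
  define z where "z = scaleC (1 / t) a"
  define G where "G = scaleC (t ^ n) (\<Sum>l<n+1. z ^ l)"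
  have zD[simp]: "z \<in> dc S" and GD[simp]: "G \<in> dc S" unfolding z_def G_def by simp_all
  have LG: "(L - a) * G = scaleC (t ^ (n + 1)) 1 - a ^ (n + 1)"
  proof -
    have La: "L - a = scaleC t (1 - z)" unfolding L_def z_def using l0
      by (simp add: sC_diff_right scaleC_scaleC scaleC_one)
    have "(L - a) * G = scaleC (t * t ^ n) ((1 - z) * (\<Sum>l<n+1. z ^ l))"
      unfolding La G_def by (simp add: mult_scaleC_left mult_scaleC_right scaleC_scaleC power_commutes)
    also have "\<dots> = scaleC (t ^ (n + 1)) (1 - z ^ (n + 1))" using geom_factor(1)[of z "n+1"] by simp
    also have "\<dots> = scaleC (t ^ (n + 1)) 1 - a ^ (n + 1)"
      unfolding z_def sC_power using l0 by (simp add: sC_diff_right scaleC_scaleC scaleC_one power_one_over)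
    finally show ?thesis .
  qed
  have R2: "(M - qq) * p = (L - a) * ((1 - G) * p)"
  proof -
    have e: "a ^ (n + 2) = a ^ (n + 1) * a" using power_add[of a "n+1" 1] by simp
    have "qq * p = a * p - a ^ (n + 1) * (a * x * p)"
      unfolding qq_def e by (simp only: left_diff_distrib mult.assoc)
    also have "a * x * p = p" unfolding p_def[symmetric] by (rule pp)
    finally have qp: "qq * p = a * p - a ^ (n + 1) * p" .
    have M: "M = L - scaleC (t ^ (n + 1)) 1" unfolding M_def L_def \<mu>_def by (simp add: sC_diff_left)
    have "(M - qq) * p = (L - a) * p - (scaleC (t ^ (n + 1)) 1 - a ^ (n + 1)) * p"
      unfolding M using qp by (simp add: algebra_simps)
    also have "\<dots> = (L - a) * p - (L - a) * G * p" unfolding LG ..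
    also have "\<dots> = (L - a) * ((1 - G) * p)" by (simp add: algebra_simps)
    finally show ?thesis .
  qed
  define Y where "Y = k1 * (1 - p) + (1 - G) * p * k2"
  have YD: "Y \<in> dc S" unfolding Y_def by simp
  have "(L - a) * Y = (L - a) * (1 - p) * k1 + (L - a) * ((1 - G) * p) * k2"
  proof -
    have "k1 * (1 - p) = (1 - p) * k1" by (rule cm) simp_all
    then show ?thesis unfolding Y_def by (simp add: distrib_left mult.assoc)
  qed
  also have "\<dots> = (1 - p) * ((L - qq) * k1) + p * ((M - qq) * k2)"
  proof -
    have "(L - a) * (1 - p) * k1 = (L - qq) * (1 - p) * k1" using R1 by simp
    also have "\<dots> = (1 - p) * ((L - qq) * k1)" using cm[of "L - qq" "1 - p"] by (simp add: mult.assoc)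
    finally have e1: "(L - a) * (1 - p) * k1 = (1 - p) * ((L - qq) * k1)" .
    have "(L - a) * ((1 - G) * p) * k2 = (M - qq) * p * k2" using R2 by simp
    also have "\<dots> = p * ((M - qq) * k2)" using cm[of "M - qq" p] by (simp add: mult.assoc)
    finally have e2: "(L - a) * ((1 - G) * p) * k2 = p * ((M - qq) * k2)" .
    show ?thesis using e1 e2 by simp
  qed
  also have "\<dots> = 1" using k1 k2 by simp
  finally have l: "(L - a) * Y = 1" .
  have r: "Y * (L - a) = 1" using l cm[OF YD, of "L - a"] by simp
  show ?thesis using invertible_I[OF l r] unfolding L_def .
qed


lemma gbin_half_bound: "\<bar>((-1/2::real) gchoose k)\<bar> \<le> 1"
proof (induction k)
  case (Suc k)
  let ?a = "-1/2::real"
  have "?a * (?a gchoose k) = of_nat k * (?a gchoose k) + of_nat (Suc k) * (?a gchoose Suc k)"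
    by (rule gbinomial_mult_1)
  then have e: "of_nat (Suc k) * (?a gchoose Suc k) = (?a - of_nat k) * (?a gchoose k)"
    by (simp add: algebra_simps)
  have "of_nat (Suc k) * \<bar>?a gchoose Suc k\<bar> = \<bar>?a - of_nat k\<bar> * \<bar>?a gchoose k\<bar>"
    using arg_cong[OF e, of abs] by (simp add: abs_mult)
  also have "\<dots> \<le> of_nat (Suc k) * 1"
    by (intro mult_mono) (use Suc in auto)
  finally show ?case by simp
qed simp

lemma dc_sR[simp]: "y \<in> dc S \<Longrightarrow> r *\<^sub>R y \<in> dc S"
  using dc_sC[of y S "of_real r"] by (simp add: scaleC_of_real)

lemma coef_summable:
  fixes e :: "'a::complex_banach_algebra_1" and \<gamma> :: "nat \<Rightarrow> real"
  assumes N: "Nq e" and b: "\<And>k. \<bar>\<gamma> k\<bar> \<le> C * 4 ^ k"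
  shows "summable (\<lambda>k. norm (\<gamma> k *\<^sub>R e ^ k))"
proof -
  obtain m0 where m0: "\<forall>m\<ge>m0. norm (e ^ m) \<le> (1/8) ^ m" using N unfolding Nq_def by force
  have C: "C \<ge> 0" using b[of 0] by simp
  have bd: "norm (norm (\<gamma> k *\<^sub>R e ^ k)) \<le> C * (1/2) ^ k" if "k \<ge> m0" for k
  proof -
    have "norm (norm (\<gamma> k *\<^sub>R e ^ k)) = \<bar>\<gamma> k\<bar> * norm (e ^ k)" by simp
    also have "\<dots> \<le> (C * 4 ^ k) * (1/8) ^ k" using m0 that b C by (intro mult_mono) auto
    also have "\<dots> = C * (1/2) ^ k"
    proof -
      have "(4::real) ^ k * (1/8) ^ k = (4 * (1/8)) ^ k" by (rule power_mult_distrib[symmetric])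
      then show ?thesis by (simp add: mult.assoc)
    qed
    finally show ?thesis .
  qed
  have sg: "summable (\<lambda>k. C * (1/2::real) ^ k)" by (intro summable_mult summable_geometric) simp
  show ?thesis by (rule summable_comparison_test'[where N = m0, OF sg bd])
qed

lemma geo_inv:
  fixes w :: "'a::{real_normed_algebra_1,banach}"
  assumes s: "summable (\<lambda>k. w ^ k)"
  shows "(\<Sum>k. w ^ k) * (1 - w) = 1" "(1 - w) * (\<Sum>k. w ^ k) = 1"
proof -
  define S where "S = (\<Sum>n. w ^ n)"
  have s1: "(\<Sum>n. w ^ Suc n) = S - 1" unfolding S_def using suminf_split_head[OF s] by simp
  have "w * S = (\<Sum>n. w * w ^ n)" unfolding S_def using suminf_mult[OF s, of w] by simp
  then have uS: "w * S = S - 1" using s1 by simp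
  have "S * w = (\<Sum>n. w ^ n * w)" unfolding S_def using suminf_mult2[OF s, of w] by simp
  then have Su: "S * w = S - 1" using s1 by (simp add: power_commutes)
  show "(\<Sum>k. w ^ k) * (1 - w) = 1" using Su unfolding S_def by (simp add: algebra_simps)
  show "(1 - w) * (\<Sum>k. w ^ k) = 1" using uS unfolding S_def by (simp add: algebra_simps)
qed


lemma gbin_m1: "((-1::real) gchoose k) = (-1) ^ k"
proof -
  have "((-1::real) gchoose k) = (-1) ^ k * ((of_nat k - (-1) - 1) gchoose k)"
    by (rule gbinomial_negated_upper)
  also have "(of_nat k - (-1) - 1 :: real) = of_nat k" by simp
  also have "(of_nat k gchoose k :: real) = of_nat (k choose k)" by (rule binomial_gbinomial[symmetric])
  finally show ?thesis by simp
qed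

lemma beta_conv: "(\<Sum>i\<le>k. (((-1/2::real) gchoose i) * (-4) ^ i) * (((-1/2) gchoose (k - i)) * (-4) ^ (k - i))) = 4 ^ k"
proof -
  have "(\<Sum>i\<le>k. (((-1/2::real) gchoose i) * (-4) ^ i) * (((-1/2) gchoose (k - i)) * (-4) ^ (k - i)))
      = (\<Sum>i\<le>k. (-4) ^ k * (((-1/2::real) gchoose i) * ((-1/2) gchoose (k - i))))"
  proof (rule sum.cong)
    fix i assume "i \<in> {..k}"
    then have X: "(-4::real) ^ i * (-4) ^ (k - i) = (-4) ^ k" by (simp flip: power_add)
    have "(((-1/2::real) gchoose i) * (-4) ^ i) * (((-1/2) gchoose (k - i)) * (-4) ^ (k - i))
      = ((-4::real) ^ i * (-4) ^ (k - i)) * (((-1/2::real) gchoose i) * ((-1/2) gchoose (k - i)))"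
      by (simp only: mult.assoc mult.commute mult.left_commute)
    then show "(((-1/2::real) gchoose i) * (-4) ^ i) * (((-1/2) gchoose (k - i)) * (-4) ^ (k - i))
      = (-4) ^ k * (((-1/2::real) gchoose i) * ((-1/2) gchoose (k - i)))"
      unfolding X .
  qed simp
  also have "\<dots> = (-4) ^ k * (\<Sum>i\<le>k. ((-1/2::real) gchoose i) * ((-1/2) gchoose (k - i)))"
    by (simp add: sum_distrib_left)
  also have "(\<Sum>i\<le>k. ((-1/2::real) gchoose i) * ((-1/2) gchoose (k - i))) = ((-1/2) + (-1/2)) gchoose k"
    using gbinomial_Vandermonde[of "-1/2::real" "-1/2" k] by (simp add: atMost_atLeast0)
  also have "((-1/2) + (-1/2::real)) = -1" by simp
  also have "(-4::real) ^ k * ((-1) gchoose k) = 4 ^ k" unfolding gbin_m1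
    by (simp flip: power_mult_distrib)
  finally show ?thesis .
qed

lemma lift_idem:
  fixes c :: "'a::complex_banach_algebra_1"
  assumes Sc: "\<And>s t. s \<in> S \<Longrightarrow> t \<in> S \<Longrightarrow> s * t = t * s"
    and cD: "c \<in> dc S" and N: "Nq (c - c * c)"
  shows "\<exists>p. p \<in> dc S \<and> p * p = p \<and> Nq (c - p)"
proof -
  have cm: "y \<in> dc S \<Longrightarrow> w \<in> dc S \<Longrightarrow> y * w = w * y" for y w by (rule dc_comm[OF Sc])
  define e where "e = c - c * c"
  have eD: "e \<in> dc S" unfolding e_def using cD by simp
  have Ne: "Nq e" unfolding e_def by (rule N)
  define \<beta> where "\<beta> k = ((-1/2::real) gchoose k) * (-4) ^ k" for k
  have \<beta>b: "\<bar>\<beta> k\<bar> \<le> 1 * 4 ^ k" for k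
    unfolding \<beta>_def using gbin_half_bound[of k] by (simp add: abs_mult power_abs mult_right_le_one_le)
  have \<beta>0: "\<beta> 0 = 1" unfolding \<beta>_def by simp
  define T where "T k = \<beta> k *\<^sub>R e ^ k" for k
  have nT: "summable (\<lambda>k. norm (T k))" unfolding T_def by (rule coef_summable[OF Ne \<beta>b])
  have sT: "summable T" using nT by (rule summable_norm_cancel)
  define h where "h = suminf T"
  have hD: "h \<in> dc S" unfolding h_def T_def using eD by (intro dc_suminf[OF sT[unfolded T_def]]) simp
  define w where "w = (4::real) *\<^sub>R e"
  have wk: "w ^ k = (4 ^ k) *\<^sub>R e ^ k" for k unfolding w_def by (rule scaleR_power)
  have sw: "summable (\<lambda>k. w ^ k)"
  proof -
    have "summable (\<lambda>k. norm ((4 ^ k) *\<^sub>R e ^ k))" by (rule coef_summable[OF Ne, of _ 1]) simp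
    then show ?thesis unfolding wk by (rule summable_norm_cancel)
  qed
  have hh: "h * h = (\<Sum>k. w ^ k)"
  proof -
    have "h * h = (\<Sum>k. \<Sum>i\<le>k. T i * T (k - i))" unfolding h_def by (rule Cauchy_product[OF nT nT])
    also have "\<dots> = (\<Sum>k. w ^ k)"
    proof (rule suminf_cong)
      fix k
      have "(\<Sum>i\<le>k. T i * T (k - i)) = (\<Sum>i\<le>k. (\<beta> i * \<beta> (k - i)) *\<^sub>R e ^ k)"
      proof (rule sum.cong)
        fix i assume "i \<in> {..k}"
        then have "e ^ i * e ^ (k - i) = e ^ k" by (simp flip: power_add)
        then show "T i * T (k - i) = (\<beta> i * \<beta> (k - i)) *\<^sub>R e ^ k"
          unfolding T_def by (simp add: mult_scaleR_left mult_scaleR_right)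
      qed simp
      also have "\<dots> = (\<Sum>i\<le>k. \<beta> i * \<beta> (k - i)) *\<^sub>R e ^ k" by (simp add: scaleR_sum_left)
      also have "(\<Sum>i\<le>k. \<beta> i * \<beta> (k - i)) = 4 ^ k" unfolding \<beta>_def by (rule beta_conv)
      finally show "(\<Sum>i\<le>k. T i * T (k - i)) = w ^ k" unfolding wk .
    qed
    finally show ?thesis .
  qed
  define V where "V = 2 *\<^sub>R c - 1"
  have VD: "V \<in> dc S" unfolding V_def using cD by simp
  have VV: "V * V = 1 - w"
    unfolding V_def w_def e_def using scaleR_add_left[of 2 2 c] by (simp add: algebra_simps scaleR_diff_right)
  define W where "W = V * h"
  have WW: "W * W = 1"
  proof -
    have "W * W = V * (h * V) * h" unfolding W_def by (simp add: mult.assoc)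
    also have "\<dots> = (V * V) * (h * h)" using cm[OF hD VD] by (simp add: mult.assoc)
    also have "\<dots> = 1" unfolding VV hh using geo_inv(2)[OF sw] .
    finally show ?thesis .
  qed
  define p where "p = (1/2::real) *\<^sub>R (1 + W)"
  have pD: "p \<in> dc S" unfolding p_def W_def using VD hD by simp
  have pp: "p * p = p"
  proof -
    have "(1 + W) * (1 + W) = 2 *\<^sub>R (1 + W)" using WW by (simp add: algebra_simps scaleR_2)
    then show ?thesis unfolding p_def by (simp add: mult_scaleR_left mult_scaleR_right)
  qed
  define U where "U k = \<beta> (Suc k) *\<^sub>R e ^ k" for k
  have \<beta>b': "\<bar>\<beta> (Suc k)\<bar> \<le> 4 * 4 ^ k" for k using \<beta>b[of "Suc k"] by simp
  have nU: "summable (\<lambda>k. norm (U k))" unfolding U_def by (rule coef_summable[OF Ne \<beta>b'])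
  have sU: "summable U" using nU by (rule summable_norm_cancel)
  define g where "g = suminf U"
  have gD: "g \<in> dc S" unfolding g_def U_def using eD by (intro dc_suminf[OF sU[unfolded U_def]]) simp
  have h1: "h - 1 = e * g"
  proof -
    have "(\<Sum>k. T (Suc k)) = h - T 0" unfolding h_def by (rule suminf_split_head[OF sT])
    moreover have "T 0 = 1" unfolding T_def \<beta>0 by simp
    moreover have "(\<Sum>k. T (Suc k)) = (\<Sum>k. e * U k)"
      unfolding T_def U_def by (simp add: mult_scaleR_right)
    moreover have "(\<Sum>k. e * U k) = e * g" unfolding g_def by (rule suminf_mult[OF sU])
    ultimately show ?thesis by simp
  qed
  define k0 where "k0 = (-1/2::real) *\<^sub>R (V * g)"
  have k0D: "k0 \<in> dc S" unfolding k0_def using VD gD by simp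
  have cp: "c - p = e * k0"
  proof -
    have "c - p = (1/2::real) *\<^sub>R (V - V * h)"
      unfolding p_def W_def V_def by (simp add: algebra_simps scaleR_diff_right)
    also have "V - V * h = - (V * (h - 1))" by (simp add: algebra_simps)
    also have "\<dots> = - (V * (e * g))" unfolding h1 ..
    also have "V * (e * g) = e * (V * g)" using cm[OF VD eD] by (metis mult.assoc)
    finally show ?thesis unfolding k0_def by (simp add: mult_scaleR_right)
  qed
  have "Nq (c - p)" unfolding cp by (rule Nq_mult[OF Ne cm[OF eD k0D]])
  then show ?thesis using pD pp by blast
qed


lemma pow_inv:
  fixes a :: "'a::complex_banach_algebra_1"
  assumes n: "n > 0" and H: "\<And>t. t \<noteq> 0 \<Longrightarrow> t ^ n \<noteq> 1 \<Longrightarrow> invertible_el (scaleC t 1 - a)"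
    and t0: "t \<noteq> 0" and t1: "t \<noteq> 1"
  shows "invertible_el (scaleC t 1 - a ^ n)"
proof -
  define \<zeta> where "\<zeta> = exp (Ln t / of_nat n)"
  have z0: "\<zeta> \<noteq> 0" unfolding \<zeta>_def by simp
  have zn: "\<zeta> ^ n = t"
  proof -
    have "\<zeta> ^ n = exp (of_nat n * (Ln t / of_nat n))" unfolding \<zeta>_def by (rule exp_of_nat_mult[symmetric])
    also have "\<dots> = exp (Ln t)" using n by simp
    finally show ?thesis using t0 by simp
  qed
  define x where "x = scaleC (1 / \<zeta>) a"
  have inv: "invertible_el (1 - scaleC (rou n ^ j) x)" if "j < n" for j
  proof -
    have r0: "rou n ^ j \<noteq> 0" unfolding rou_def by simp
    define s where "s = \<zeta> / rou n ^ j"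
    have s0: "s \<noteq> 0" unfolding s_def using z0 r0 by simp
    have "s ^ n = \<zeta> ^ n / (rou n ^ j) ^ n" unfolding s_def by (simp add: power_divide)
    also have "(rou n ^ j) ^ n = 1" using rou_pow_m[OF n] by (metis power_mult mult.commute power_one)
    finally have sn: "s ^ n = t" using zn by simp
    have "invertible_el (scaleC s 1 - a)" using H[OF s0] sn t1 by simp
    then have "invertible_el (scaleC (1 / s) (scaleC s 1 - a))" using inv_sC[of "1/s" "scaleC s 1 - a"] s0 by simp
    moreover have "scaleC (1 / s) (scaleC s 1 - a) = 1 - scaleC (rou n ^ j) x"
      unfolding x_def s_def using z0 r0 by (simp add: sC_diff_right scaleC_scaleC scaleC_one)
    ultimately show ?thesis by simp
  qed
  have "invertible_el (1 - x ^ n)" using avg_inv[OF n inv] by blast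
  then have "invertible_el (scaleC t (1 - x ^ n))" using t0 inv_sC by blast
  moreover have "scaleC t (1 - x ^ n) = scaleC t 1 - a ^ n"
    unfolding x_def sC_power using t0 zn by (simp add: sC_diff_right scaleC_scaleC power_one_over scaleC_one)
  ultimately show ?thesis by simp
qed

lemma quad_qnil:
  fixes a :: "'a::complex_banach_algebra_1"
  assumes n: "n > 0" and H: "\<And>t. t \<noteq> 0 \<Longrightarrow> t ^ n \<noteq> 1 \<Longrightarrow> invertible_el (scaleC t 1 - a)"
  shows "Nq (a ^ n - a ^ n * a ^ n)"
proof -
  define c where "c = a ^ n"
  have "invertible_el (scaleC \<mu> 1 - (c - c * c))" if mu: "\<mu> \<noteq> 0" for \<mu>
  proof -
    define t1 where "t1 = (1 + csqrt (1 - 4 * \<mu>)) / 2"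
    define t2 where "t2 = 1 - t1"
    have pr: "t1 * t2 = \<mu>"
    proof -
      have "t1 * t2 = (1 - (csqrt (1 - 4 * \<mu>))^2) / 4" unfolding t2_def t1_def
        by (simp add: field_simps power2_eq_square)
      also have "(csqrt (1 - 4 * \<mu>))^2 = 1 - 4 * \<mu>" by (rule power2_csqrt)
      finally show ?thesis by simp
    qed
    have a1: "t1 \<noteq> 0" "t2 \<noteq> 0" using pr mu by auto
    have a2: "t1 \<noteq> 1" "t2 \<noteq> 1" using a1 unfolding t2_def by auto
    have i1: "invertible_el (scaleC t1 1 - c)" unfolding c_def by (rule pow_inv[OF n H a1(1) a2(1)])
    have i2: "invertible_el (scaleC t2 1 - c)" unfolding c_def by (rule pow_inv[OF n H a1(2) a2(2)])
    have "(scaleC t1 1 - c) * (scaleC t2 1 - c) = scaleC t1 (scaleC t2 1 - c) - c * (scaleC t2 1 - c)"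
      by (simp only: left_diff_distrib sC_1_mult)
    also have "\<dots> = scaleC (t1 * t2) 1 - scaleC t1 c - (scaleC t2 c - c * c)"
      by (simp add: sC_diff_right right_diff_distrib scaleC_scaleC)
    also have "\<dots> = scaleC (t1 * t2) 1 - (scaleC t1 c + scaleC t2 c) + c * c"
      by (simp add: algebra_simps)
    also have "scaleC t1 c + scaleC t2 c = c" unfolding t2_def
      by (simp add: scaleC_add_left[symmetric] scaleC_one)
    finally have "(scaleC t1 1 - c) * (scaleC t2 1 - c) = scaleC \<mu> 1 - (c - c * c)"
      using pr by (simp add: algebra_simps)
    then show ?thesis using inv_mult[OF i1 i2] by simp
  qed
  then have "\<forall>r>0. \<exists>m0. \<forall>m\<ge>m0. norm ((c - c * c) ^ m) \<le> r ^ m" using qnil_decay by blast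
  then show ?thesis unfolding Nq_def c_def .
qed


lemma idem_pow:
  fixes p s :: "'a::ring_1"
  assumes pp: "p * p = p" and sp: "s * p = p * s"
  shows "((1 - p) + s * p) ^ k = (1 - p) + s ^ k * p"
proof (induction k)
  case 0 then show ?case by simp
next
  case (Suc k)
  have skp: "s ^ k * p = p * s ^ k" by (rule comm_pow[OF sp])
  have p1: "p * (1 - p) = 0" "(1 - p) * p = 0" using pp by (simp_all add: algebra_simps)
  have "((1 - p) + s * p) ^ Suc k = ((1 - p) + s ^ k * p) * ((1 - p) + s * p)"
    by (simp only: power_Suc2 Suc.IH)
  also have "\<dots> = (1 - p) * (1 - p) + (1 - p) * (s * p) + s ^ k * (p * (1 - p)) + s ^ k * (p * s * p)"
    by (simp add: algebra_simps)
  also have "(1 - p) * (s * p) = s * ((1 - p) * p)"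
  proof -
    have a1: "(1 - p) * (s * p) = s * p - p * (s * p)" by (simp add: left_diff_distrib)
    have "p * (s * p) = (p * s) * p" by (simp only: mult.assoc)
    also have "\<dots> = (s * p) * p" by (simp only: sp[symmetric])
    also have "\<dots> = s * (p * p)" by (simp only: mult.assoc)
    finally have a2: "p * (s * p) = s * (p * p)" .
    have a3: "s * ((1 - p) * p) = s * p - s * (p * p)" by (simp add: left_diff_distrib right_diff_distrib)
    show ?thesis unfolding a1 a2 a3 ..
  qed
  also have "p * s * p = s * (p * p)"
  proof -
    have "p * s * p = (s * p) * p" using sp by simp
    then show ?thesis by (simp only: mult.assoc)
  qed
  also have "(1 - p) * (1 - p) = 1 - p" using p1 by (simp add: algebra_simps)
  finally show ?case using p1 pp by (simp add: mult.assoc[symmetric] power_Suc2 del: power_Suc)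
qed

lemma spec_gpi:
  fixes a :: "'a::complex_banach_algebra_1"
  assumes n: "n > 0" and H: "\<And>t. t \<noteq> 0 \<Longrightarrow> t ^ n \<noteq> 1 \<Longrightarrow> invertible_el (scaleC t 1 - a)"
  shows "gpi_Hirano_invertible a"
proof -
  define S where "S = {a}"
  have Sc: "\<And>s t. s \<in> S \<Longrightarrow> t \<in> S \<Longrightarrow> s * t = t * s" unfolding S_def by auto
  have aD[simp]: "a \<in> dc S" unfolding S_def by (auto intro: dc_mem)
  have cm: "y \<in> dc S \<Longrightarrow> w \<in> dc S \<Longrightarrow> y * w = w * y" for y w by (rule dc_comm[OF Sc])
  have cml: "y \<in> dc S \<Longrightarrow> w \<in> dc S \<Longrightarrow> y * (w * z) = w * (y * z)" for y w z
    by (metis cm mult.assoc)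
  define c where "c = a ^ n"
  have cD[simp]: "c \<in> dc S" unfolding c_def by simp
  have Nc: "Nq (c - c * c)" unfolding c_def by (rule quad_qnil[OF n H])
  obtain p where pD[simp]: "p \<in> dc S" and pp: "p * p = p" and Ncp: "Nq (c - p)"
    using lift_idem[OF Sc cD Nc] by blast
  define w where "w = 1 + (c - p)"
  have wD[simp]: "w \<in> dc S" unfolding w_def by simp
  have iw: "invertible_el w"
  proof -
    have e: "scaleC (-1) 1 - (c - p) = - w" unfolding w_def by (simp add: sC_minus_left scaleC_one)
    have "invertible_el (scaleC (-1) 1 - (c - p))" using Nq_inv[OF Ncp] by simp
    then have "invertible_el (- w)" unfolding e .
    then show ?thesis using inv_minus by fastforce
  qed
  define v where "v = binv w"
  have vD[simp]: "v \<in> dc S" unfolding v_def using iw by simp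
  have vw: "v * w = 1" "w * v = 1" unfolding v_def using binv[OF iw] by auto
  have cp: "c * p = w * p" unfolding w_def using pp by (simp add: algebra_simps)
  have vcp: "v * (c * p) = p" using cp vw by (simp add: mult.assoc[symmetric])
  define x where "x = a ^ (n - 1) * v * p"
  have xD[simp]: "x \<in> dc S" unfolding x_def by simp
  have an: "a ^ (n - 1) * a = c" unfolding c_def using n by (simp add: power_Suc2[symmetric])
  have ax: "a * x = x * a" by (rule cm) simp_all
  have xax: "x * a * x = x"
  proof -
    have "x * a * x = (a ^ (n - 1) * a) * (a ^ (n - 1) * (v * (v * (p * p))))"
      unfolding x_def by (simp add: cm cml mult.assoc)
    also have "\<dots> = a ^ (n - 1) * (v * (v * (c * p)))" unfolding an pp by (simp add: cm cml mult.assoc)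
    also have "\<dots> = x" unfolding vcp x_def by (simp add: mult.assoc)
    finally show ?thesis .
  qed
  define q where "q = a - a ^ (n + 2) * x"
  have ax2: "a ^ (n + 2) * x = a ^ (n + 1) * p"
  proof -
    have e1: "(n + 2) + (n - 1) = (n + 1) + n" using n by simp
    have "a ^ (n + 2) * a ^ (n - 1) = a ^ ((n + 2) + (n - 1))" by (simp only: power_add)
    also have "\<dots> = a ^ ((n + 1) + n)" by (simp only: e1)
    also have "\<dots> = a ^ (n + 1) * c" unfolding c_def by (simp only: power_add)
    finally have "a ^ (n + 2) * a ^ (n - 1) = a ^ (n + 1) * c" .
    note e = this
    have "a ^ (n + 2) * x = (a ^ (n + 2) * a ^ (n - 1)) * (v * p)" unfolding x_def by (simp only: mult.assoc)
    also have "\<dots> = a ^ (n + 1) * (c * (v * p))" unfolding e by (simp only: mult.assoc)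
    also have "c * (v * p) = v * (c * p)" by (rule cml) simp_all
    finally show ?thesis unfolding vcp .
  qed
  define r where "r = 1 - c * p"
  have rD[simp]: "r \<in> dc S" unfolding r_def by simp
  have qar: "q = a * r" unfolding q_def r_def ax2 c_def by (simp add: algebra_simps power_add mult.assoc)
  have qn: "q ^ n = c * r ^ n" unfolding qar c_def by (rule pow_mult_comm) (rule cm; simp)
  define s where "s = - (c - p)"
  have sD[simp]: "s \<in> dc S" unfolding s_def by simp
  have rs: "r = (1 - p) + s * p" unfolding r_def s_def using pp by (simp add: algebra_simps)
  have rn: "r ^ n = (1 - p) + s ^ n * p" unfolding rs by (rule idem_pow[OF pp]) (rule cm; simp)
  obtain m where m: "n = Suc m" using n by (cases n) auto
  define K where "K = (1 - p) - c * (s ^ m * p)"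
  have KD[simp]: "K \<in> dc S" unfolding K_def by simp
  have qK: "q ^ n = (c - p) * K"
  proof -
    have sn: "s ^ n = s * s ^ m" using m by simp
    have "q ^ n = c * ((1 - p) + s ^ n * p)" unfolding qn rn ..
    also have "\<dots> = c * (1 - p) + c * (s * (s ^ m * p))" unfolding sn
      by (simp only: distrib_left mult.assoc)
    also have "c * (1 - p) = (c - p) * (1 - p)" using pp by (simp add: algebra_simps)
    also have "c * (s * (s ^ m * p)) = s * (c * (s ^ m * p))" by (simp add: cml)
    also have "s * (c * (s ^ m * p)) = - ((c - p) * (c * (s ^ m * p)))" unfolding s_def by (simp only: minus_mult_left)
    finally show ?thesis unfolding K_def by (simp add: algebra_simps)
  qed
  have "Nq (q ^ n)" unfolding qK by (rule Nq_mult[OF Ncp]) (rule cm; simp)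
  then have "quasinilpotent q" using Nq_pow_qnil n by blast
  then show ?thesis unfolding gpi_Hirano_invertible_def q_def using xax ax n by blast
qed


lemma ab_forward:
  fixes a b :: "'a::complex_banach_algebra_1"
  assumes ab: "a * b = 0" and t: "t \<noteq> 0"
    and ia: "invertible_el (scaleC t 1 - a)" and ib: "invertible_el (scaleC t 1 - b)"
  shows "invertible_el (scaleC t 1 - (a + b))"
proof -
  have "(scaleC t 1 - a) * (scaleC t 1 - b) = scaleC t (scaleC t 1 - (a + b))"
    using ab by (simp add: left_diff_distrib right_diff_distrib sC_diff_right scaleC_add_right algebra_simps)
  then have "invertible_el (scaleC t (scaleC t 1 - (a + b)))" using inv_mult[OF ia ib] by simp
  then show ?thesis using inv_sC_iff[OF t] by blast
qed

lemma prod_id: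
  fixes a b :: "'a::complex_banach_algebra_1"
  assumes ab: "a * b = 0"
  shows "(scaleC t 1 - a) * (scaleC t 1 - b) = scaleC t (scaleC t 1 - (a + b))"
  using ab by (simp add: left_diff_distrib right_diff_distrib sC_diff_right scaleC_add_right algebra_simps)

lemma fill_gen:
  fixes a :: "'a::complex_banach_algebra_1" and G :: "complex \<Rightarrow> 'a"
  assumes conn: "connected \<Omega>" and cG: "continuous_on \<Omega> G"
    and iff: "\<And>t. t \<in> \<Omega> \<Longrightarrow> invertible_el (scaleC t 1 - a) \<longleftrightarrow> G t = 1"
    and t0: "t0 \<in> \<Omega>" "invertible_el (scaleC t0 1 - a)"
  shows "\<forall>t\<in>\<Omega>. invertible_el (scaleC t 1 - a)"
proof -
  define U where "U = {t \<in> \<Omega>. G t = 1}"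
  have op: "open {t. invertible_el (scaleC t 1 - a)}"
    unfolding open_dist
  proof (intro ballI)
    fix t assume "t \<in> {t. invertible_el (scaleC t 1 - a)}"
    then obtain d where d: "d > 0" "\<forall>x'. dist x' (scaleC t 1 - a) < d \<longrightarrow> invertible_el x'"
      using inv_open by blast
    { fix y assume "dist y t < d"
      moreover have "dist (scaleC y 1 - a) (scaleC t 1 - a) = dist y t"
        by (simp add: dist_norm sC_diff_left[symmetric] norm_sC1)
      ultimately have "invertible_el (scaleC y 1 - a)" using d by simp }
    then show "\<exists>e>0. \<forall>y. dist y t < e \<longrightarrow> y \<in> {t. invertible_el (scaleC t 1 - a)}" using d by auto
  qed
  have U1: "U = \<Omega> \<inter> {t. invertible_el (scaleC t 1 - a)}" unfolding U_def using iff by auto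
  have "openin (top_of_set \<Omega>) U" unfolding U1 using op by auto
  moreover have "closedin (top_of_set \<Omega>) U" unfolding U_def by (rule continuous_closedin_preimage_constant[OF cG])
  ultimately have "U = {} \<or> U = \<Omega>" using conn unfolding connected_clopen by blast
  moreover have "t0 \<in> U" using t0 iff unfolding U_def by auto
  ultimately have "U = \<Omega>" by auto
  then show ?thesis unfolding U1 by auto
qed

lemma big_inv:
  fixes a :: "'a::complex_banach_algebra_1"
  assumes tn: "cmod t > norm a"
  shows "invertible_el (scaleC t 1 - a)"
proof -
  have t0: "t \<noteq> 0" using tn norm_ge_zero[of a] by auto
  have "norm (scaleC (1 / t) a) = norm a / cmod t" by (simp add: norm_scaleC norm_divide)
  also have "\<dots> < 1" using tn t0 by simp
  finally have "invertible_el (1 - scaleC (1 / t) a)" using neumann by blast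
  then have "invertible_el (scaleC t (1 - scaleC (1 / t) a))" using inv_sC t0 by blast
  moreover have "scaleC t (1 - scaleC (1 / t) a) = scaleC t 1 - a"
    using t0 by (simp add: sC_diff_right scaleC_scaleC scaleC_one)
  ultimately show ?thesis by simp
qed

lemma ab_back:
  fixes a b :: "'a::complex_banach_algebra_1"
  assumes ab: "a * b = 0" and N: "N > 0"
    and Hs: "\<And>t. t \<noteq> 0 \<Longrightarrow> t ^ N \<noteq> 1 \<Longrightarrow> invertible_el (scaleC t 1 - (a + b))"
  shows "(\<forall>t. t \<noteq> 0 \<longrightarrow> t ^ N \<noteq> 1 \<longrightarrow> invertible_el (scaleC t 1 - a)) \<and>
         (\<forall>t. t \<noteq> 0 \<longrightarrow> t ^ N \<noteq> 1 \<longrightarrow> invertible_el (scaleC t 1 - b))"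
proof -
  define T where "T = {0::complex} \<union> {t. t ^ N = 1}"
  define \<Omega> where "\<Omega> = UNIV - T"
  have fT: "finite T" unfolding T_def using finite_roots_unity[of N] N by simp
  have conn: "connected \<Omega>" unfolding \<Omega>_def
    by (rule connected_open_diff_countable) (use fT in \<open>auto intro: countable_finite\<close>)
  have inO: "t \<in> \<Omega> \<longleftrightarrow> t \<noteq> 0 \<and> t ^ N \<noteq> 1" for t unfolding \<Omega>_def T_def by auto
  define s where "s = a + b"
  define F where "F t = scaleC t (1::'a) - s" for t
  have iF: "invertible_el (F t)" if "t \<in> \<Omega>" for t using Hs that inO unfolding F_def s_def by auto
  have cL: "continuous_on \<Omega> (\<lambda>t. scaleC t (1::'a))" by (rule cont_sC)
  have cF: "continuous_on \<Omega> F" unfolding F_def by (intro continuous_intros cL)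
  have cBF: "continuous_on \<Omega> (\<lambda>t. binv (F t))" by (rule continuous_on_binv[OF cF iF])
  have cI: "continuous_on \<Omega> (\<lambda>t. scaleC (1 / t) (1::'a))"
  proof -
    have "continuous_on \<Omega> (\<lambda>t::complex. 1 / t)" by (intro continuous_intros) (use inO in auto)
    from continuous_on_compose[OF this cont_sC[of "(\<lambda>t. 1/t) ` \<Omega>" 1]] show ?thesis by (simp add: o_def)
  qed
  have pa: "(scaleC t 1 - a) * (scaleC t 1 - b) = scaleC t (F t)" for t unfolding F_def s_def by (rule prod_id[OF ab])
    define Ga where "Ga t = (scaleC (1 / t) 1 * ((scaleC t 1 - b) * binv (F t))) * (scaleC t 1 - a)" for t
  have cGa: "continuous_on \<Omega> Ga" unfolding Ga_def
    by (intro continuous_on_mult cI cBF continuous_on_diff cL continuous_on_const)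
  have iffa: "invertible_el (scaleC t 1 - a) \<longleftrightarrow> Ga t = 1" if t: "t \<in> \<Omega>" for t
  proof -
    define R where "R = scaleC (1 / t) 1 * ((scaleC t 1 - b) * binv (F t))"
    have t0: "t \<noteq> 0" using t inO by auto
    have rR: "(scaleC t 1 - a) * R = 1"
    proof -
      have "(scaleC t 1 - a) * R = scaleC (1 / t) (((scaleC t 1 - a) * (scaleC t 1 - b)) * binv (F t))"
        unfolding R_def by (simp add: mult.assoc mult_scaleC_right mult_scaleC_left)
      also have "\<dots> = 1" unfolding pa using binv[OF iF[OF t]] t0
        by (simp add: mult_scaleC_left scaleC_scaleC scaleC_one)
      finally show ?thesis .
    qed
    show ?thesis
    proof
      assume i: "invertible_el (scaleC t 1 - a)"
      have "R = binv (scaleC t 1 - a) * ((scaleC t 1 - a) * R)" using binv[OF i] by (simp add: mult.assoc[symmetric])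
      then have "R = binv (scaleC t 1 - a)" using rR by simp
      then show "Ga t = 1" unfolding Ga_def R_def[symmetric] using binv[OF i] by simp
    next
      assume "Ga t = 1"
      then have "R * (scaleC t 1 - a) = 1" unfolding Ga_def R_def .
      then show "invertible_el (scaleC t 1 - a)" using rR invertible_I by blast
    qed
  qed
    define Gb where "Gb t = (scaleC t 1 - b) * (scaleC (1 / t) 1 * (binv (F t) * (scaleC t 1 - a)))" for t
  have cGb: "continuous_on \<Omega> Gb" unfolding Gb_def
    by (intro continuous_on_mult cI cBF continuous_on_diff cL continuous_on_const)
  have iffb: "invertible_el (scaleC t 1 - b) \<longleftrightarrow> Gb t = 1" if t: "t \<in> \<Omega>" for t
  proof -
    define R where "R = scaleC (1 / t) 1 * (binv (F t) * (scaleC t 1 - a))"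
    have t0: "t \<noteq> 0" using t inO by auto
    have lR: "R * (scaleC t 1 - b) = 1"
    proof -
      have "R * (scaleC t 1 - b) = scaleC (1 / t) (binv (F t) * ((scaleC t 1 - a) * (scaleC t 1 - b)))"
        unfolding R_def by (simp add: mult.assoc mult_scaleC_right mult_scaleC_left)
      also have "\<dots> = 1" unfolding pa using binv[OF iF[OF t]] t0
        by (simp add: mult_scaleC_right scaleC_scaleC scaleC_one)
      finally show ?thesis .
    qed
    show ?thesis
    proof
      assume i: "invertible_el (scaleC t 1 - b)"
      have "R = (R * (scaleC t 1 - b)) * binv (scaleC t 1 - b)" using binv[OF i] by (simp add: mult.assoc)
      then have "R = binv (scaleC t 1 - b)" using lR by simp
      then show "Gb t = 1" unfolding Gb_def R_def[symmetric] using binv[OF i] by simp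
    next
      assume "Gb t = 1"
      then have "(scaleC t 1 - b) * R = 1" unfolding Gb_def R_def .
      then show "invertible_el (scaleC t 1 - b)" using lR invertible_I by blast
    qed
  qed
  define t0 where "t0 = complex_of_real (norm a + norm b + 2)"
  have t0n: "cmod t0 = norm a + norm b + 2" unfolding t0_def norm_of_real
    using norm_ge_zero[of a] norm_ge_zero[of b] by linarith
  have t0O: "t0 \<in> \<Omega>"
  proof -
    have "cmod t0 > 1" using t0n by (smt (verit) norm_ge_zero)
    then have "cmod (t0 ^ N) > 1" using N by (simp add: norm_power one_less_power)
    then have "t0 ^ N \<noteq> 1" by auto
    moreover have "t0 \<noteq> 0" using \<open>cmod t0 > 1\<close> by auto
    ultimately show ?thesis using inO by auto
  qed
  have ia0: "invertible_el (scaleC t0 1 - a)" by (rule big_inv) (use t0n in \<open>smt (verit) norm_ge_zero\<close>)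
  have ib0: "invertible_el (scaleC t0 1 - b)" by (rule big_inv) (use t0n in \<open>smt (verit) norm_ge_zero\<close>)
  have A: "\<forall>t\<in>\<Omega>. invertible_el (scaleC t 1 - a)" by (rule fill_gen[OF conn cGa iffa t0O ia0])
  have B: "\<forall>t\<in>\<Omega>. invertible_el (scaleC t 1 - b)" by (rule fill_gen[OF conn cGb iffb t0O ib0])
  show ?thesis using A B inO by blast
qed


lemma gpi_H:
  fixes a :: "'a::complex_banach_algebra_1"
  assumes "gpi_Hirano_invertible a"
  obtains n where "n > 0" "\<And>t. t \<noteq> 0 \<Longrightarrow> t ^ n \<noteq> 1 \<Longrightarrow> invertible_el (scaleC t 1 - a)"
proof -
  obtain x n where x: "x * a * x = x" "a * x = x * a" and n: "n > 0"
    and q: "quasinilpotent (a - a ^ (n + 2) * x)"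
    using assms unfolding gpi_Hirano_invertible_def by blast
  show ?thesis by (rule that[OF n gpi_spec[OF x q]])
qed

theorem corollary3p3:
  fixes a b :: "'a::complex_banach_algebra_1"
  assumes "a * b = 0"
  shows "(gpi_Hirano_invertible a \<and> gpi_Hirano_invertible b) \<longleftrightarrow> gpi_Hirano_invertible (a + b)"
proof
  assume h: "gpi_Hirano_invertible a \<and> gpi_Hirano_invertible b"
  obtain n1 where n1: "n1 > 0" "\<And>t. t \<noteq> 0 \<Longrightarrow> t ^ n1 \<noteq> 1 \<Longrightarrow> invertible_el (scaleC t 1 - a)"
    using gpi_H h by blast
  obtain n2 where n2: "n2 > 0" "\<And>t. t \<noteq> 0 \<Longrightarrow> t ^ n2 \<noteq> 1 \<Longrightarrow> invertible_el (scaleC t 1 - b)"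
    using gpi_H h by blast
  define N where "N = n1 * n2"
  have N: "N > 0" unfolding N_def using n1 n2 by simp
  have H: "invertible_el (scaleC t 1 - (a + b))" if t: "t \<noteq> 0" "t ^ N \<noteq> 1" for t
  proof -
    have e1: "t ^ N = (t ^ n1) ^ n2" unfolding N_def by (rule power_mult)
    have e2: "t ^ N = (t ^ n2) ^ n1" unfolding N_def by (simp add: power_mult[symmetric] mult.commute)
    have "t ^ n1 \<noteq> 1" using t(2) e1 by auto
    moreover have "t ^ n2 \<noteq> 1" using t(2) e2 by auto
    ultimately show ?thesis using ab_forward[OF assms t(1) n1(2)[OF t(1)] n2(2)[OF t(1)]] by blast
  qed
  show "gpi_Hirano_invertible (a + b)" by (rule spec_gpi[OF N H])
next
  assume "gpi_Hirano_invertible (a + b)"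
  then obtain N where N: "N > 0" and H: "\<And>t. t \<noteq> 0 \<Longrightarrow> t ^ N \<noteq> 1 \<Longrightarrow> invertible_el (scaleC t 1 - (a + b))"
    by (rule gpi_H) blast+
  have AB: "(\<forall>t. t \<noteq> 0 \<longrightarrow> t ^ N \<noteq> 1 \<longrightarrow> invertible_el (scaleC t 1 - a)) \<and>
        (\<forall>t. t \<noteq> 0 \<longrightarrow> t ^ N \<noteq> 1 \<longrightarrow> invertible_el (scaleC t 1 - b))"
    by (rule ab_back[OF assms N H])
  have "gpi_Hirano_invertible a" by (rule spec_gpi[OF N]) (use AB in blast)
  moreover have "gpi_Hirano_invertible b" by (rule spec_gpi[OF N]) (use AB in blast)
  ultimately show "gpi_Hirano_invertible a \<and> gpi_Hirano_invertible b" ..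
qed


end
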